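(* Let $k\ge 3$ be an integer and let $G=(G_1,v_1,e_1)\Delta(G_2,v_2,e_2)$ be a Hajós join of two hypergraphs $G_1$ and $G_2$. Then $G\in\mathcal{C}_k$ if and only if both $G_1\in\mathcal{C}_k$ and $G_2\in\mathcal{C}_k$.
   Context: A hypergraph is a pair $G=(V,E)$ of finite sets with $E\subseteq 2^V$ and $|e|\ge2$ for all $e\in E$. A coloring requires every edge to contain two vertices of different colors; $\chi$ is the chromatic number. $G$ is $(k+1)$-critical if $\chi(G)=k+1$ but $\chi(H)\le k$ for every proper subhypergraph $H$. A $(v,w)$-hyperpath is a sequence $(v_1,e_1,\dots,e_{q-1},v_q)$ of distinct vertices and distinct edges with $v_1=v,v_q=w$, $\{v_i,v_{i+1}\}\subseteq e_i$; $\lambda_G(v,w)$ is the maximum number of pairwise edge-disjoint $(v,w)$-hyperpaths and $\lambda(G)=\max_{v\ne w}\lambda_G(v,w)$. $\mathcal{C}_k$ is the class of $(k+1)$-critical hypergraphs $H$ with $\lambda(H)\le k$. Hajós join $(G_1,v_1,e_1)\Delta(G_2,v_2,e_2)$: for vertex-disjoint $G_1,G_2$, $e_i\in E(G_i)$, $v_i\in e_i$, delete $e_1,e_2$, identify $v_1,v_2$ into a new vertex $v^*$, and add a new edge $e^*$ equal to $(e_1\cup e_2)\setminus\{v_1,v_2\}$ or to $((e_1\cup e_2)\setminus\{v_1,v_2\})\cup\{v^*\}$. *)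

theory Defs
  imports Main
begin

type_synonym 'a hgraph = "'a set \<times> 'a set set"

definition hypergraph :: "'a hgraph \<Rightarrow> bool" where
  "hypergraph G \<longleftrightarrow> finite (fst G) \<and> (\<forall>e\<in>snd G. e \<subseteq> fst G \<and> 2 \<le> card e)"

definition colorable :: "'a hgraph \<Rightarrow> nat \<Rightarrow> bool" where
  "colorable G k \<longleftrightarrow> (\<exists>f :: 'a \<Rightarrow> nat. f ` fst G \<subseteq> {..<k} \<and>
      (\<forall>e\<in>snd G. \<exists>u\<in>e. \<exists>w\<in>e. f u \<noteq> f w))"

definition chi :: "'a hgraph \<Rightarrow> nat" where
  "chi G = (LEAST k. colorable G k)"

definition proper_subhypergraph :: "'a hgraph \<Rightarrow> 'a hgraph \<Rightarrow> bool" where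
  "proper_subhypergraph H G \<longleftrightarrow> hypergraph H \<and> fst H \<subseteq> fst G \<and> snd H \<subseteq> snd G \<and> H \<noteq> G"

definition critical :: "nat \<Rightarrow> 'a hgraph \<Rightarrow> bool" where
  "critical k G \<longleftrightarrow> chi G = k + 1 \<and> (\<forall>H. proper_subhypergraph H G \<longrightarrow> chi H \<le> k)"

definition hyperpath :: "'a hgraph \<Rightarrow> 'a \<Rightarrow> 'a \<Rightarrow> 'a list \<Rightarrow> 'a set list \<Rightarrow> bool" where
  "hyperpath G v w vs es \<longleftrightarrow> vs \<noteq> [] \<and> length es + 1 = length vs \<and>
     distinct vs \<and> distinct es \<and> set vs \<subseteq> fst G \<and> set es \<subseteq> snd G \<and>
     hd vs = v \<and> last vs = w \<and>
     (\<forall>i < length es. {vs ! i, vs ! (i+1)} \<subseteq> es ! i)"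

definition local_lambda :: "'a hgraph \<Rightarrow> 'a \<Rightarrow> 'a \<Rightarrow> nat" where
  "local_lambda G v w = Max {n. \<exists>P :: ('a list \<times> 'a set list) list. length P = n \<and>
      (\<forall>p\<in>set P. hyperpath G v w (fst p) (snd p)) \<and>
      (\<forall>i<n. \<forall>j<n. i \<noteq> j \<longrightarrow> set (snd (P ! i)) \<inter> set (snd (P ! j)) = {})}"

text \<open>lambda(G) = max over distinct v,w (0 if there are fewer than two vertices).\<close>
definition hlambda :: "'a hgraph \<Rightarrow> nat" where
  "hlambda G = Max (insert 0 {local_lambda G v w | v w. v \<in> fst G \<and> w \<in> fst G \<and> v \<noteq> w})"

definition class_C :: "nat \<Rightarrow> 'a hgraph set" where
  "class_C k = {H. hypergraph H \<and> critical k H \<and> hlambda H \<le> k}"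

text \<open>Hajos join: G1, G2 vertex-disjoint, e_i an edge of G_i, v_i in e_i;
  v1 and v2 are identified into a new vertex vs (not in the remaining vertex set);
  e1, e2 are deleted and the new edge estar added, which is either
  (e1 \<union> e2) - {v1,v2} or that set together with vs.\<close>
definition hajos_join ::
  "'a hgraph \<Rightarrow> 'a \<Rightarrow> 'a set \<Rightarrow> 'a hgraph \<Rightarrow> 'a \<Rightarrow> 'a set \<Rightarrow> 'a \<Rightarrow> 'a hgraph \<Rightarrow> bool" where
  "hajos_join G1 v1 e1 G2 v2 e2 vs G \<longleftrightarrow>
     fst G1 \<inter> fst G2 = {} \<and> e1 \<in> snd G1 \<and> v1 \<in> e1 \<and> e2 \<in> snd G2 \<and> v2 \<in> e2 \<and>
     vs \<notin> (fst G1 - {v1}) \<union> (fst G2 - {v2}) \<and>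
     (let r = (\<lambda>x. if x = v1 \<or> x = v2 then vs else x);
          e0 = (e1 \<union> e2) - {v1, v2}
      in fst G = (fst G1 - {v1}) \<union> (fst G2 - {v2}) \<union> {vs} \<and>
         (snd G = (image r ` (snd G1 - {e1})) \<union> (image r ` (snd G2 - {e2})) \<union> {e0} \<or>
          snd G = (image r ` (snd G1 - {e1})) \<union> (image r ` (snd G2 - {e2})) \<union> {insert vs e0}))"

end

theory Submission
  imports Defs
begin


definition nm :: "('a \<Rightarrow> nat) \<Rightarrow> 'a set \<Rightarrow> bool" where
  "nm f e \<longleftrightarrow> (\<exists>u\<in>e. \<exists>w\<in>e. f u \<noteq> f w)"

lemma card2_ne:
  assumes "2 \<le> card e"
  shows "\<exists>b\<in>e. b \<noteq> a"
proof (rule ccontr)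
  assume "\<not> (\<exists>b\<in>e. b \<noteq> a)"
  then have "e \<subseteq> {a}" by blast
  then have "card e \<le> 1" using card_mono[of "{a}" e] by simp
  then show False using assms by simp
qed

lemma card2_two:
  assumes "2 \<le> card e"
  shows "\<exists>u w. u \<in> e \<and> w \<in> e \<and> u \<noteq> w"
proof -
  have "e \<noteq> {}" using assms by (metis card.empty not_numeral_le_zero)
  then obtain u where "u \<in> e" by blast
  then show ?thesis using card2_ne[OF assms, of u] by blast
qed

lemma colorable_nm: "colorable G k \<longleftrightarrow> (\<exists>f. f ` fst G \<subseteq> {..<k} \<and> (\<forall>e\<in>snd G. nm f e))"
  unfolding colorable_def nm_def by simp

lemma colorable_sub:
  assumes "colorable G k" "fst H \<subseteq> fst G" "snd H \<subseteq> snd G"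
  shows "colorable H k"
proof -
  obtain f where f: "f ` fst G \<subseteq> {..<k}" "\<forall>e\<in>snd G. nm f e" using assms(1) unfolding colorable_nm by blast
  then have "f ` fst H \<subseteq> {..<k}" "\<forall>e\<in>snd H. nm f e" using assms(2,3) by blast+
  then show ?thesis unfolding colorable_nm by blast
qed

lemma colorable_mono_k:
  assumes "colorable G k" "k \<le> k'"
  shows "colorable G k'"
proof -
  obtain f where f: "f ` fst G \<subseteq> {..<k}" "\<forall>e\<in>snd G. nm f e" using assms(1) unfolding colorable_nm by blast
  then have "f ` fst G \<subseteq> {..<k'}" using assms(2) by auto
  then show ?thesis using f(2) unfolding colorable_nm by blast
qed

lemma hypergraph_colorable:
  assumes "hypergraph G"
  shows "colorable G (card (fst G))"
proof -
  have fin: "finite (fst G)" using assms unfolding hypergraph_def by blast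
  obtain f :: "'a \<Rightarrow> nat" and n :: nat where f: "f ` fst G = {i. i < n}" "inj_on f (fst G)"
    using finite_imp_inj_to_nat_seg[OF fin] by blast
  have "n = card (fst G)"
    using f by (metis card_Collect_less_nat card_image)
  moreover have "\<forall>e\<in>snd G. \<exists>u\<in>e. \<exists>w\<in>e. f u \<noteq> f w"
  proof
    fix e assume e: "e \<in> snd G"
    then have "e \<subseteq> fst G" "2 \<le> card e" using assms unfolding hypergraph_def by blast+
    then obtain u w where "u \<in> e" "w \<in> e" "u \<noteq> w"
      using card2_two by blast
    then show "\<exists>u\<in>e. \<exists>w\<in>e. f u \<noteq> f w" using f(2) \<open>e \<subseteq> fst G\<close>
      by (meson inj_on_def subsetD)
  qed
  ultimately show ?thesis unfolding colorable_def using f by auto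
qed

lemma chi_le_iff:
  assumes "hypergraph G"
  shows "chi G \<le> k \<longleftrightarrow> colorable G k"
proof
  assume "chi G \<le> k"
  moreover have "colorable G (chi G)"
    unfolding chi_def by (rule LeastI, rule hypergraph_colorable[OF assms])
  ultimately show "colorable G k" using colorable_mono_k by blast
next
  assume "colorable G k" then show "chi G \<le> k" unfolding chi_def by (rule Least_le)
qed

lemma chi_eq_iff:
  assumes "hypergraph G"
  shows "chi G = k + 1 \<longleftrightarrow> colorable G (k+1) \<and> \<not> colorable G k"
  using chi_le_iff[OF assms, of k] chi_le_iff[OF assms, of "k+1"] by linarith

lemma hypergraph_edge_ex2:
  assumes "hypergraph G" "e \<in> snd G" "a \<in> e"
  shows "\<exists>b\<in>e. b \<noteq> a"
proof -
  have "2 \<le> card e" using assms unfolding hypergraph_def by blast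
  then show ?thesis using card2_ne[of e a] by blast
qed

lemma hypergraph_fin_edges:
  assumes "hypergraph G" shows "finite (snd G)"
proof -
  have "snd G \<subseteq> Pow (fst G)" using assms unfolding hypergraph_def by blast
  moreover have "finite (Pow (fst G))" using assms unfolding hypergraph_def by simp
  ultimately show ?thesis by (rule finite_subset)
qed

lemma hypergraph_sub:
  assumes "hypergraph G" "fst H \<subseteq> fst G" "snd H \<subseteq> snd G" "\<forall>e\<in>snd H. e \<subseteq> fst H"
  shows "hypergraph H"
proof -
  have "finite (fst H)" using assms(1,2) unfolding hypergraph_def using finite_subset by blast
  moreover have "\<forall>e\<in>snd H. 2 \<le> card e" using assms(1,3) unfolding hypergraph_def by blast
  ultimately show ?thesis using assms(4) unfolding hypergraph_def by blast
qed

lemma psub_edge: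
  assumes "hypergraph G" "e \<in> snd G"
  shows "proper_subhypergraph (fst G, snd G - {e}) G"
proof -
  have "hypergraph (fst G, snd G - {e})" using assms(1) unfolding hypergraph_def by auto
  moreover have "(fst G, snd G - {e}) \<noteq> G" using assms(2) by (metis Diff_iff snd_conv insertI1)
  ultimately show ?thesis unfolding proper_subhypergraph_def by auto
qed

lemma psub_vertex:
  assumes "hypergraph G" "x \<in> fst G" "\<forall>e\<in>snd G. x \<notin> e"
  shows "proper_subhypergraph (fst G - {x}, snd G) G"
proof -
  have "hypergraph (fst G - {x}, snd G)"
    using assms unfolding hypergraph_def by auto
  moreover have "(fst G - {x}, snd G) \<noteq> G" using assms(2) by (metis Diff_iff fst_conv insertI1)
  ultimately show ?thesis unfolding proper_subhypergraph_def by auto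
qed

lemma psub_cases:
  assumes "proper_subhypergraph H G"
  obtains e where "e \<in> snd G" "fst H \<subseteq> fst G" "snd H \<subseteq> snd G - {e}"
  | x where "x \<in> fst G" "\<forall>e\<in>snd G. x \<notin> e" "fst H \<subseteq> fst G - {x}" "snd H = snd G"
proof (cases "snd H = snd G")
  case True
  then have "fst H \<noteq> fst G" using assms unfolding proper_subhypergraph_def by (metis prod_eqI)
  then obtain x where x: "x \<in> fst G" "x \<notin> fst H" using assms unfolding proper_subhypergraph_def by blast
  have "\<forall>e\<in>snd G. x \<notin> e" using x True assms unfolding proper_subhypergraph_def hypergraph_def by blast
  then show ?thesis using that(2)[of x] x True assms unfolding proper_subhypergraph_def by blast
next
  case False
  then obtain e where "e \<in> snd G" "e \<notin> snd H" using assms unfolding proper_subhypergraph_def by blast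
  then show ?thesis using that(1)[of e] assms unfolding proper_subhypergraph_def by blast
qed

definition crit :: "nat \<Rightarrow> 'a hgraph \<Rightarrow> bool" where
  "crit k G \<longleftrightarrow> hypergraph G \<and> \<not> colorable G k \<and> (\<forall>H. proper_subhypergraph H G \<longrightarrow> colorable H k)"

lemma remove_edge_add_color:
  assumes "hypergraph G" "e \<in> snd G" "colorable (fst G, snd G - {e}) k"
  shows "colorable G (k+1)"
proof -
  obtain f where f: "f ` fst G \<subseteq> {..<k}" "\<forall>e'\<in>snd G - {e}. nm f e'"
    using assms(3) unfolding colorable_nm by auto
  obtain a where a: "a \<in> e" using assms(1,2) card2_two unfolding hypergraph_def by metis
  define g where "g = f(a := k)"
  have "g ` fst G \<subseteq> {..<k+1}" using f unfolding g_def by auto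
  moreover have "\<forall>e'\<in>snd G. nm g e'"
  proof
    fix e' assume e': "e' \<in> snd G"
    show "nm g e'"
    proof (cases "a \<in> e'")
      case True
      obtain b where b: "b \<in> e'" "b \<noteq> a" using hypergraph_edge_ex2[OF assms(1) e' True] by blast
      have "e' \<subseteq> fst G" using assms(1) e' unfolding hypergraph_def by blast
      then have "f b < k" using f b by auto
      then show ?thesis unfolding nm_def g_def using b True by (metis fun_upd_apply less_irrefl)
    next
      case False
      then have "e' \<noteq> e" using a by blast
      then have "nm f e'" using f e' by blast
      then show ?thesis unfolding nm_def g_def using False by (metis fun_upd_other)
    qed
  qed
  ultimately show ?thesis unfolding colorable_nm by blast
qed

lemma no_edge_colorable:
  assumes "snd G = {}" "k \<ge> 1" shows "colorable G k"
  unfolding colorable_nm using assms by (intro exI[of _ "\<lambda>_. 0"]) auto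

lemma critical_iff:
  assumes "k \<ge> 1"
  shows "hypergraph G \<and> critical k G \<longleftrightarrow> crit k G"
proof
  assume a: "hypergraph G \<and> critical k G"
  then have h: "hypergraph G" by blast
  have "\<forall>H. proper_subhypergraph H G \<longrightarrow> colorable H k"
  proof (intro allI impI)
    fix H assume "proper_subhypergraph H G"
    then show "colorable H k" using a chi_le_iff[of H k] unfolding critical_def proper_subhypergraph_def by blast
  qed
  then show "crit k G" using a chi_eq_iff[OF h] unfolding crit_def critical_def by blast
next
  assume c: "crit k G"
  then have h: "hypergraph G" and nc: "\<not> colorable G k"
    and ps: "\<forall>H. proper_subhypergraph H G \<longrightarrow> colorable H k" unfolding crit_def by blast+
  obtain e where e: "e \<in> snd G" using no_edge_colorable[OF _ assms] nc by blast
  have "colorable G (k+1)" using remove_edge_add_color[OF h e] ps psub_edge[OF h e] by blast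
  then have "chi G = k+1" using chi_eq_iff[OF h] nc by blast
  moreover have "\<forall>H. proper_subhypergraph H G \<longrightarrow> chi H \<le> k"
  proof (intro allI impI)
    fix H assume "proper_subhypergraph H G"
    then show "chi H \<le> k" using ps chi_le_iff[of H k] unfolding proper_subhypergraph_def by blast
  qed
  ultimately show "hypergraph G \<and> critical k G" using h unfolding critical_def by blast
qed




definition adj :: "'a set set \<Rightarrow> 'a \<Rightarrow> 'a \<Rightarrow> bool" where
  "adj F x y \<longleftrightarrow> (\<exists>e\<in>F. x \<in> e \<and> y \<in> e)"

definition conn :: "'a set set \<Rightarrow> 'a \<Rightarrow> 'a \<Rightarrow> bool" where
  "conn F = (adj F)\<^sup>*\<^sup>*"

lemma conn_refl[simp]: "conn F x x" unfolding conn_def by simp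

lemma conn_edge: "e \<in> F \<Longrightarrow> x \<in> e \<Longrightarrow> y \<in> e \<Longrightarrow> conn F x y"
  unfolding conn_def adj_def by (rule r_into_rtranclp) blast

lemma conn_trans: "conn F x y \<Longrightarrow> conn F y z \<Longrightarrow> conn F x z"
  unfolding conn_def by (rule rtranclp_trans)

lemma conn_sym: assumes "conn F x y" shows "conn F y x"
  using assms unfolding conn_def
proof (induction rule: rtranclp_induct)
  case base then show ?case by simp
next
  case (step y z)
  then have "adj F z y" unfolding adj_def by blast
  then show ?case using step(3) by (meson converse_rtranclp_into_rtranclp)
qed

lemma conn_mono: assumes "conn F x y" "F \<subseteq> F'" shows "conn F' x y"
  using assms(1) unfolding conn_def
proof (induction rule: rtranclp_induct)
  case base then show ?case by simp
next
  case (step y z)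
  then have "adj F' y z" using assms(2) unfolding adj_def by blast
  then show ?case using step(3) by (meson rtranclp.rtrancl_into_rtrancl)
qed

lemma path_conn_aux:
  assumes "hyperpath G u w vs es"
  shows "i < length vs \<Longrightarrow> conn (set es) u (vs ! i)"
proof (induction i)
  case 0
  then show ?case using assms unfolding hyperpath_def by (metis conn_refl hd_conv_nth)
next
  case (Suc i)
  then have i: "i < length es" using assms unfolding hyperpath_def by simp
  then have "{vs ! i, vs ! (i+1)} \<subseteq> es ! i" using assms unfolding hyperpath_def by blast
  moreover have "es ! i \<in> set es" using i by simp
  ultimately have "conn (set es) (vs ! i) (vs ! Suc i)" using conn_edge by fastforce
  then show ?case using Suc conn_trans by (metis Suc_lessD)
qed

lemma path_conn:
  assumes "hyperpath G u w vs es"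
  shows "conn (set es) u w"
proof -
  have "last vs = vs ! (length vs - 1)" "length vs - 1 < length vs"
    using assms unfolding hyperpath_def by (auto simp: last_conv_nth)
  then show ?thesis using path_conn_aux[OF assms] assms unfolding hyperpath_def by metis
qed

lemma path_extend:
  assumes p: "hyperpath G u y vs es" and e: "e \<in> snd G" "y \<in> e" "y' \<in> e" and y': "y' \<in> fst G"
  shows "\<exists>vs' es'. hyperpath G u y' vs' es' \<and> set es' \<subseteq> insert e (set es)"
proof -
  have ne: "vs \<noteq> []" and len: "length es + 1 = length vs" and dvs: "distinct vs" and des: "distinct es"
    and svs: "set vs \<subseteq> fst G" and ses: "set es \<subseteq> snd G" and hd: "hd vs = u" and lst: "last vs = y"
    and ad: "\<forall>i < length es. {vs ! i, vs ! (i+1)} \<subseteq> es ! i"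
    using p unfolding hyperpath_def by blast+
  show ?thesis
  proof (cases "y' \<in> set vs")
    case True
    then obtain j where j: "j < length vs" "vs ! j = y'" by (meson in_set_conv_nth)
    define vs' where "vs' = take (Suc j) vs"
    define es' where "es' = take j es"
    have "hyperpath G u y' vs' es'"
      unfolding hyperpath_def
    proof (intro conjI)
      show "vs' \<noteq> []" using ne unfolding vs'_def by simp
      show "length es' + 1 = length vs'" using len j unfolding vs'_def es'_def by simp
      show "distinct vs'" "distinct es'" using dvs des unfolding vs'_def es'_def by simp_all
      show "set vs' \<subseteq> fst G" "set es' \<subseteq> snd G" using svs ses unfolding vs'_def es'_def
        by (meson order_trans set_take_subset)+
      show "hd vs' = u" using hd ne unfolding vs'_def by simp
      show "last vs' = y'" using j unfolding vs'_def by (simp add: take_Suc_conv_app_nth)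
      show "\<forall>i<length es'. {vs' ! i, vs' ! (i + 1)} \<subseteq> es' ! i"
        using ad j len unfolding vs'_def es'_def by auto
    qed
    moreover have "set es' \<subseteq> insert e (set es)" unfolding es'_def by (meson set_take_subset subset_insertI2)
    ultimately show ?thesis by blast
  next
    case False
    note ny = False
    show ?thesis
    proof (cases "e \<in> set es")
      case True
      then obtain i where i: "i < length es" "es ! i = e" by (meson in_set_conv_nth)
      define vs' where "vs' = take (Suc i) vs @ [y']"
      define es' where "es' = take i es @ [e]"
      have enot: "e \<notin> set (take i es)"
      proof
        assume "e \<in> set (take i es)"
        then obtain l where l: "l < length (take i es)" "take i es ! l = e" by (meson in_set_conv_nth)
        then have "l < i" "es ! l = e" by auto
        then show False using des i nth_eq_iff_index_eq by fastforce
      qed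
      have lv: "length (take (Suc i) vs) = Suc i" using i len by simp
      have lt: "length (take i es) = i" using i by simp
      have "hyperpath G u y' vs' es'"
        unfolding hyperpath_def
      proof (intro conjI)
        show "vs' \<noteq> []" unfolding vs'_def by simp
        show "length es' + 1 = length vs'" using lv lt unfolding vs'_def es'_def by simp
        show "distinct vs'" using dvs ny unfolding vs'_def by (auto dest: in_set_takeD)
        show "distinct es'" using des enot unfolding es'_def by simp
        show "set vs' \<subseteq> fst G" using svs y' unfolding vs'_def by (auto dest: in_set_takeD)
        show "set es' \<subseteq> snd G" using ses e(1) unfolding es'_def by (auto dest: in_set_takeD)
        show "hd vs' = u" using hd ne unfolding vs'_def by simp
        show "last vs' = y'" unfolding vs'_def by simp
        show "\<forall>l<length es'. {vs' ! l, vs' ! (l + 1)} \<subseteq> es' ! l"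
        proof (intro allI impI)
          fix l assume l: "l < length es'"
          then have "l \<le> i" unfolding es'_def using lt by simp
          show "{vs' ! l, vs' ! (l + 1)} \<subseteq> es' ! l"
          proof (cases "l < i")
            case True
            then have "vs' ! l = vs ! l" "vs' ! (l+1) = vs ! (l+1)" "es' ! l = es ! l"
              unfolding vs'_def es'_def using lv lt by (auto simp: nth_append)
            then show ?thesis using ad True i by simp
          next
            case False
            then have li: "l = i" using \<open>l \<le> i\<close> by simp
            then have "vs' ! l = vs ! i" "vs' ! (l+1) = y'" "es' ! l = e"
              unfolding vs'_def es'_def using lv lt by (auto simp: nth_append)
            then show ?thesis using ad i e by auto
          qed
        qed
      qed
      moreover have "set es' \<subseteq> insert e (set es)" unfolding es'_def by (auto dest: in_set_takeD)
      ultimately show ?thesis by blast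
    next
      case False
      define vs' where "vs' = vs @ [y']"
      define es' where "es' = es @ [e]"
      have lasty: "vs ! length es = y" using lst len ne by (metis add_diff_cancel_right' last_conv_nth)
      have "hyperpath G u y' vs' es'"
        unfolding hyperpath_def
      proof (intro conjI)
        show "vs' \<noteq> []" unfolding vs'_def by simp
        show "length es' + 1 = length vs'" using len unfolding vs'_def es'_def by simp
        show "distinct vs'" using dvs ny unfolding vs'_def by simp
        show "distinct es'" using des False unfolding es'_def by simp
        show "set vs' \<subseteq> fst G" using svs y' unfolding vs'_def by simp
        show "set es' \<subseteq> snd G" using ses e(1) unfolding es'_def by simp
        show "hd vs' = u" using hd ne unfolding vs'_def by simp
        show "last vs' = y'" unfolding vs'_def by simp
        show "\<forall>l<length es'. {vs' ! l, vs' ! (l + 1)} \<subseteq> es' ! l"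
        proof (intro allI impI)
          fix l assume l: "l < length es'"
          show "{vs' ! l, vs' ! (l + 1)} \<subseteq> es' ! l"
          proof (cases "l < length es")
            case True
            then have "vs' ! l = vs ! l" "vs' ! (l+1) = vs ! (l+1)" "es' ! l = es ! l"
              unfolding vs'_def es'_def using len by (auto simp: nth_append)
            then show ?thesis using ad True by simp
          next
            case False
            then have li: "l = length es" using l unfolding es'_def by simp
            then have "vs' ! l = y" "vs' ! (l+1) = y'" "es' ! l = e"
              unfolding vs'_def es'_def using len lasty by (auto simp: nth_append)
            then show ?thesis using e by auto
          qed
        qed
      qed
      moreover have "set es' \<subseteq> insert e (set es)" unfolding es'_def by auto
      ultimately show ?thesis by blast
    qed
  qed
qed

lemma conn_path:
  assumes hG: "hypergraph G" and F: "F \<subseteq> snd G" and u: "u \<in> fst G" and c: "conn F u w"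
  shows "\<exists>vs es. hyperpath G u w vs es \<and> set es \<subseteq> F"
  using c unfolding conn_def
proof (induction rule: rtranclp_induct)
  case base
  have "hyperpath G u u [u] ([] :: 'a set list)" using u unfolding hyperpath_def by simp
  then show ?case by (intro exI[of _ "[u]"] exI[of _ "[] :: 'a set list"]) simp
next
  case (step y y')
  then obtain vs es where p: "hyperpath G u y vs es" "set es \<subseteq> F" by blast
  obtain e where e: "e \<in> F" "y \<in> e" "y' \<in> e" using step(2) unfolding adj_def by blast
  have eG: "e \<in> snd G" using e F by blast
  then have "y' \<in> fst G" using hG e unfolding hypergraph_def by blast
  then obtain vs' es' where "hyperpath G u y' vs' es'" "set es' \<subseteq> insert e (set es)"
    using path_extend[OF p(1) eG e(2,3)] by blast
  then show ?case using p(2) e(1) by blast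
qed

definition NS :: "'a hgraph \<Rightarrow> 'a \<Rightarrow> 'a \<Rightarrow> nat set" where
  "NS G v w = {n. \<exists>P :: ('a list \<times> 'a set list) list. length P = n \<and>
      (\<forall>p\<in>set P. hyperpath G v w (fst p) (snd p)) \<and>
      (\<forall>i<n. \<forall>j<n. i \<noteq> j \<longrightarrow> set (snd (P ! i)) \<inter> set (snd (P ! j)) = {})}"

lemma local_lambda_NS: "local_lambda G v w = Max (NS G v w)"
  unfolding local_lambda_def NS_def by simp

lemma NS_0: "0 \<in> NS G v w" unfolding NS_def by (intro CollectI exI[of _ "[]"]) simp

lemma path_nonempty:
  assumes "hyperpath G u w vs es" "u \<noteq> w" shows "es \<noteq> []"
proof
  assume "es = []"
  then have "length vs = 1" using assms unfolding hyperpath_def by simp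
  then obtain x where "vs = [x]" by (metis One_nat_def length_0_conv length_Suc_conv)
  then show False using assms unfolding hyperpath_def by auto
qed

lemma NS_bound:
  assumes hG: "hypergraph G" and neq: "u \<noteq> w" and n: "n \<in> NS G u w"
  shows "n \<le> card (snd G)"
proof -
  obtain P :: "('a list \<times> 'a set list) list" where P: "length P = n"
    "\<forall>p\<in>set P. hyperpath G u w (fst p) (snd p)"
    "\<forall>i<n. \<forall>j<n. i \<noteq> j \<longrightarrow> set (snd (P ! i)) \<inter> set (snd (P ! j)) = {}"
    using n unfolding NS_def by blast
  define f where "f i = hd (snd (P ! i))" for i
  have pi: "\<And>i. i < n \<Longrightarrow> hyperpath G u w (fst (P ! i)) (snd (P ! i))" using P by auto
  have fin: "\<And>i. i < n \<Longrightarrow> f i \<in> set (snd (P ! i))"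
    unfolding f_def using pi path_nonempty[OF _ neq] by (meson hd_in_set)
  have "inj_on f {..<n}"
  proof (rule inj_onI)
    fix i j assume "i \<in> {..<n}" "j \<in> {..<n}" "f i = f j"
    then show "i = j" using fin P(3) by (metis IntI empty_iff lessThan_iff)
  qed
  moreover have "f ` {..<n} \<subseteq> snd G"
    using fin pi unfolding hyperpath_def by blast
  ultimately have "card {..<n} \<le> card (snd G)"
    using card_inj_on_le hypergraph_fin_edges[OF hG] by blast
  then show ?thesis by simp
qed

lemma NS_finite:
  assumes "hypergraph G" "u \<noteq> w" shows "finite (NS G u w)"
  using NS_bound[OF assms] by (meson finite_atMost finite_subset subsetI atMost_iff)

lemma lambda_mono:
  fixes G G' :: "'a hgraph"
  assumes hG': "hypergraph G'" and neq': "u' \<noteq> w'" and u': "u' \<in> fst G'"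
    and sub: "\<And>S. S \<subseteq> snd G \<Longrightarrow> \<Phi> S \<subseteq> snd G'"
    and disj: "\<And>S S'. S \<subseteq> snd G \<Longrightarrow> S' \<subseteq> snd G \<Longrightarrow> S \<inter> S' = {} \<Longrightarrow> \<Phi> S \<inter> \<Phi> S' = {}"
    and cn: "\<And>vs es. hyperpath G u w vs es \<Longrightarrow> conn (\<Phi> (set es)) u' w'"
  shows "local_lambda G u w \<le> local_lambda G' u' w'"
proof -
  have "NS G u w \<subseteq> NS G' u' w'"
  proof
    fix n assume "n \<in> NS G u w"
    then obtain P :: "('a list \<times> 'a set list) list" where P: "length P = n"
      "\<forall>p\<in>set P. hyperpath G u w (fst p) (snd p)"
      "\<forall>i<n. \<forall>j<n. i \<noteq> j \<longrightarrow> set (snd (P ! i)) \<inter> set (snd (P ! j)) = {}"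
      unfolding NS_def by blast
    define Q where "Q p = (SOME q. hyperpath G' u' w' (fst q) (snd q) \<and> set (snd q) \<subseteq> \<Phi> (set (snd p)))"
      for p :: "'a list \<times> 'a set list"
    have Qp: "hyperpath G' u' w' (fst (Q p)) (snd (Q p)) \<and> set (snd (Q p)) \<subseteq> \<Phi> (set (snd p))"
      if "p \<in> set P" for p
    proof -
      have hp: "hyperpath G u w (fst p) (snd p)" using P that by blast
      then have "set (snd p) \<subseteq> snd G" unfolding hyperpath_def by blast
      then have "\<Phi> (set (snd p)) \<subseteq> snd G'" using sub by blast
      then obtain vs es where "hyperpath G' u' w' vs es" "set es \<subseteq> \<Phi> (set (snd p))"
        using conn_path[OF hG' _ u' cn[OF hp]] by blast
      then have "\<exists>q. hyperpath G' u' w' (fst q) (snd q) \<and> set (snd q) \<subseteq> \<Phi> (set (snd p))"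
        by (intro exI[of _ "(vs, es)"]) simp
      then show ?thesis unfolding Q_def by (rule someI_ex)
    qed
    define P' where "P' = map Q P"
    have "length P' = n" using P unfolding P'_def by simp
    moreover have "\<forall>p\<in>set P'. hyperpath G' u' w' (fst p) (snd p)"
      using Qp unfolding P'_def by auto
    moreover have "\<forall>i<n. \<forall>j<n. i \<noteq> j \<longrightarrow> set (snd (P' ! i)) \<inter> set (snd (P' ! j)) = {}"
    proof (intro allI impI)
      fix i j assume ij: "i < n" "j < n" "i \<noteq> j"
      have "P ! i \<in> set P" "P ! j \<in> set P" using ij P(1) by auto
      then have si: "set (snd (P' ! i)) \<subseteq> \<Phi> (set (snd (P ! i)))"
        and sj: "set (snd (P' ! j)) \<subseteq> \<Phi> (set (snd (P ! j)))"
        using Qp ij P(1) unfolding P'_def by auto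
      have "set (snd (P ! i)) \<subseteq> snd G" "set (snd (P ! j)) \<subseteq> snd G"
        using \<open>P ! i \<in> set P\<close> \<open>P ! j \<in> set P\<close> P(2) unfolding hyperpath_def by blast+
      then have "\<Phi> (set (snd (P ! i))) \<inter> \<Phi> (set (snd (P ! j))) = {}"
        using disj P(3) ij by blast
      then show "set (snd (P' ! i)) \<inter> set (snd (P' ! j)) = {}" using si sj by blast
    qed
    ultimately show "n \<in> NS G' u' w'" unfolding NS_def by blast
  qed
  then show ?thesis unfolding local_lambda_NS
    using Max_mono NS_0 NS_finite[OF hG' neq'] by (metis empty_iff)
qed

lemma hlambda_le:
  assumes hG: "hypergraph G"
    and "\<And>u w. u \<in> fst G \<Longrightarrow> w \<in> fst G \<Longrightarrow> u \<noteq> w \<Longrightarrow> local_lambda G u w \<le> k"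
  shows "hlambda G \<le> k"
proof -
  have fin: "finite (fst G)" using hG unfolding hypergraph_def by blast
  have "{local_lambda G v w | v w. v \<in> fst G \<and> w \<in> fst G \<and> v \<noteq> w}
       \<subseteq> (\<lambda>(v,w). local_lambda G v w) ` (fst G \<times> fst G)" by auto
  then have "finite {local_lambda G v w | v w. v \<in> fst G \<and> w \<in> fst G \<and> v \<noteq> w}"
    using fin by (meson finite_SigmaI finite_imageI finite_subset)
  then show ?thesis unfolding hlambda_def using assms(2) by (auto intro!: Max.boundedI)
qed

lemma local_le_hlambda:
  assumes hG: "hypergraph G" and "u \<in> fst G" "w \<in> fst G" "u \<noteq> w"
  shows "local_lambda G u w \<le> hlambda G"
proof -
  have fin: "finite (fst G)" using hG unfolding hypergraph_def by blast
  have "{local_lambda G v w | v w. v \<in> fst G \<and> w \<in> fst G \<and> v \<noteq> w}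
       \<subseteq> (\<lambda>(v,w). local_lambda G v w) ` (fst G \<times> fst G)" by auto
  then have "finite {local_lambda G v w | v w. v \<in> fst G \<and> w \<in> fst G \<and> v \<noteq> w}"
    using fin by (meson finite_SigmaI finite_imageI finite_subset)
  then show ?thesis unfolding hlambda_def using assms(2-4) by (intro Max_ge) auto
qed




lemma perm_exists:
  assumes "p < k" "a < k" "p \<noteq> a" "c < k" "d < k" "c \<noteq> d"
  shows "\<exists>\<sigma>::nat\<Rightarrow>nat. (\<forall>x<k. \<sigma> x < k) \<and> inj_on \<sigma> {..<k} \<and> \<sigma> p = c \<and> \<sigma> a = d"
proof -
  define A where "A = {..<k} - {p, a}"
  define B where "B = {..<k} - {c, d}"
  have "card A = card B" unfolding A_def B_def using assms by (simp add: card_Diff_subset)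
  then obtain \<tau> where t: "bij_betw \<tau> A B" using finite_same_card_bij unfolding A_def B_def by blast
  define \<sigma> where "\<sigma> x = (if x = p then c else if x = a then d else \<tau> x)" for x
  have tA: "\<And>x. x \<in> A \<Longrightarrow> \<tau> x \<in> B" using t by (meson bij_betwE)
  have "\<forall>x<k. \<sigma> x < k"
  proof (intro allI impI)
    fix x assume "x < k"
    then show "\<sigma> x < k" using assms tA unfolding \<sigma>_def A_def B_def by auto
  qed
  moreover have "inj_on \<sigma> {..<k}"
  proof (rule inj_onI)
    fix x y assume xy: "x \<in> {..<k}" "y \<in> {..<k}" "\<sigma> x = \<sigma> y"
    have io: "inj_on \<tau> A" using t by (simp add: bij_betw_def)
    show "x = y"
    proof (cases "x \<in> {p, a}")
      case True
      show ?thesis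
      proof (cases "y \<in> {p, a}")
        case True
        then show ?thesis using \<open>x \<in> {p,a}\<close> xy assms unfolding \<sigma>_def by auto
      next
        case False
        then have "y \<in> A" using xy unfolding A_def by auto
        then have "\<sigma> y \<in> B" using tA False unfolding \<sigma>_def by auto
        then show ?thesis using True xy assms(3) unfolding \<sigma>_def B_def by auto
      qed
    next
      case False
      then have xA: "x \<in> A" using xy unfolding A_def by auto
      then have sx: "\<sigma> x \<in> B" using tA False unfolding \<sigma>_def by auto
      show ?thesis
      proof (cases "y \<in> {p, a}")
        case True
        then show ?thesis using sx xy assms(3) unfolding \<sigma>_def B_def by auto
      next
        case False
        then have "y \<in> A" using xy unfolding A_def by auto
        then show ?thesis using xA xy False \<open>x \<notin> {p,a}\<close> io unfolding \<sigma>_def by (auto dest: inj_onD)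
      qed
    qed
  qed
  moreover have "\<sigma> p = c" "\<sigma> a = d" using assms unfolding \<sigma>_def by auto
  ultimately show ?thesis by blast
qed

lemma nm_inj:
  assumes "nm g e" "\<forall>x\<in>e. g x < k" "inj_on \<sigma> {..<k}"
  shows "nm (\<sigma> \<circ> g) e"
  using assms unfolding nm_def by (metis comp_apply inj_on_def lessThan_iff)

lemma suc_mod_inj:
  fixes x y k :: nat
  assumes "x < k" "y < k" "x \<noteq> y"
  shows "Suc x mod k \<noteq> Suc y mod k"
proof -
  have hx: "Suc x mod k = (if Suc x = k then 0 else Suc x)" using assms(1) by auto
  have hy: "Suc y mod k = (if Suc y = k then 0 else Suc y)" using assms(2) by auto
  show ?thesis using hx hy assms by auto
qed

lemma suc_mod_ne:
  fixes x k :: nat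
  assumes "x < k" "2 \<le> k"
  shows "Suc x mod k \<noteq> x"
proof -
  have hx: "Suc x mod k = (if Suc x = k then 0 else Suc x)" using assms(1) by auto
  show ?thesis using hx assms by auto
qed

lemma recolor_conn:
  assumes hH: "hypergraph H" and e: "e \<in> snd H" and v: "v \<in> e" and nc: "\<not> colorable H k"
    and c: "colorable (fst H, snd H - {e}) k" and k: "2 \<le> k"
  shows "\<exists>b\<in>e - {v}. conn (snd H - {e}) v b"
proof (rule ccontr)
  assume nb: "\<not> (\<exists>b\<in>e - {v}. conn (snd H - {e}) v b)"
  obtain g where g: "g ` fst H \<subseteq> {..<k}" "\<forall>e'\<in>snd H - {e}. nm g e'"
    using c unfolding colorable_nm by auto
  have eH: "e \<subseteq> fst H" using hH e unfolding hypergraph_def by blast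
  have "colorable H k"
  proof (cases "nm g e")
    case True
    then have "\<forall>e'\<in>snd H. nm g e'" using g by blast
    then show ?thesis using g(1) unfolding colorable_nm by blast
  next
    case False
    then have mono: "\<forall>y\<in>e. g y = g v" using v unfolding nm_def by blast
    define C where "C = {y. conn (snd H - {e}) v y}"
    define g' where "g' y = (if y \<in> C then Suc (g y) mod k else g y)" for y
    have "g' ` fst H \<subseteq> {..<k}" using g k unfolding g'_def by auto
    moreover have "\<forall>e'\<in>snd H. nm g' e'"
    proof
      fix e' assume e': "e' \<in> snd H"
      have e'H: "e' \<subseteq> fst H" using hH e' unfolding hypergraph_def by blast
      show "nm g' e'"
      proof (cases "e' = e")
        case True
        obtain b where b: "b \<in> e" "b \<noteq> v" using hypergraph_edge_ex2[OF hH e v] by blast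
        have "b \<notin> C" using nb b unfolding C_def by blast
        moreover have "v \<in> C" unfolding C_def by simp
        moreover have "g v < k" using g eH v by auto
        moreover have "g b = g v" using mono b by blast
        ultimately have 1: "g' b = g v" and 2: "g' v = Suc (g v) mod k"
          unfolding g'_def by simp_all
        have 3: "Suc (g v) mod k \<noteq> g v" by (rule suc_mod_ne[OF \<open>g v < k\<close> k])
        have "g' b \<noteq> g' v" unfolding 1 2 using 3 by (rule not_sym)
        then show ?thesis unfolding nm_def using True b v by blast
      next
        case False
        then have ng: "nm g e'" using g e' by blast
        then obtain u w where uw: "u \<in> e'" "w \<in> e'" "g u \<noteq> g w" unfolding nm_def by blast
        show ?thesis
        proof (cases "e' \<inter> C = {}")
          case True
          then have "g' u = g u" "g' w = g w" unfolding g'_def using uw by auto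
          then show ?thesis using uw unfolding nm_def by metis
        next
          case False
          then obtain y where y: "y \<in> e'" "y \<in> C" by blast
          have "\<And>x. x \<in> e' \<Longrightarrow> x \<in> C"
          proof -
            fix x assume "x \<in> e'"
            then have "conn (snd H - {e}) y x" using conn_edge[of e' "snd H - {e}"] y e' \<open>e' \<noteq> e\<close> by blast
            moreover have "conn (snd H - {e}) v y" using y(2) unfolding C_def by simp
            ultimately have "conn (snd H - {e}) v x" using conn_trans by metis
            then show "x \<in> C" unfolding C_def by simp
          qed
          then have "u \<in> C" "w \<in> C" using uw by blast+
          then have "g' u = Suc (g u) mod k" "g' w = Suc (g w) mod k" unfolding g'_def by simp_all
          moreover have "g u < k" "g w < k" using g(1) e'H uw by (meson image_subset_iff lessThan_iff subsetD)+
          ultimately have "g' u \<noteq> g' w" using suc_mod_inj uw(3) by simp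
          then show ?thesis using uw unfolding nm_def by blast
        qed
      qed
    qed
    ultimately show ?thesis unfolding colorable_nm by blast
  qed
  then show False using nc by blast
qed

lemma deg_le1:
  assumes hH: "hypergraph H" and nc: "\<not> colorable H k"
    and ps: "\<forall>H'. proper_subhypergraph H' H \<longrightarrow> colorable H' k" and k: "2 \<le> k"
    and x: "x \<in> fst H" and one: "\<forall>e\<in>snd H. \<forall>e'\<in>snd H. x \<in> e \<longrightarrow> x \<in> e' \<longrightarrow> e = e'"
  shows False
proof (cases "\<exists>e\<in>snd H. x \<in> e")
  case True
  then obtain e where e: "e \<in> snd H" "x \<in> e" by blast
  have "colorable (fst H, snd H - {e}) k" using ps psub_edge[OF hH e(1)] by blast
  then obtain g where g: "g ` fst H \<subseteq> {..<k}" "\<forall>e'\<in>snd H - {e}. nm g e'"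
    unfolding colorable_nm by auto
  have eH: "e \<subseteq> fst H" using hH e unfolding hypergraph_def by blast
  have "colorable H k"
  proof (cases "nm g e")
    case True
    then have "\<forall>e'\<in>snd H. nm g e'" using g by blast
    then show ?thesis using g(1) unfolding colorable_nm by blast
  next
    case False
    then have mono: "\<forall>y\<in>e. g y = g x" using e unfolding nm_def by blast
    define g' where "g' = g(x := (if g x = 0 then 1 else 0))"
    have "g' ` fst H \<subseteq> {..<k}" using g k unfolding g'_def by auto
    moreover have "\<forall>e'\<in>snd H. nm g' e'"
    proof
      fix e' assume e': "e' \<in> snd H"
      show "nm g' e'"
      proof (cases "e' = e")
        case True
        obtain b where b: "b \<in> e" "b \<noteq> x" using hypergraph_edge_ex2[OF hH e] by blast
        have "g b = g x" using mono b by blast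
        then have "g' b \<noteq> g' x" unfolding g'_def using b by auto
        then show ?thesis unfolding nm_def using True b e by blast
      next
        case False
        then have "x \<notin> e'" using one e e' by blast
        moreover have "nm g e'" using g e' False by blast
        ultimately show ?thesis unfolding nm_def g'_def by (metis fun_upd_other)
      qed
    qed
    ultimately show ?thesis unfolding colorable_nm by blast
  qed
  then show False using nc by blast
next
  case False
  have "colorable (fst H - {x}, snd H) k" using ps psub_vertex[OF hH x] False by blast
  then obtain g where g: "g ` (fst H - {x}) \<subseteq> {..<k}" "\<forall>e'\<in>snd H. nm g e'"
    unfolding colorable_nm by auto
  define g' where "g' = g(x := 0)"
  have "g' ` fst H \<subseteq> {..<k}" using g k unfolding g'_def by auto
  moreover have "\<forall>e'\<in>snd H. nm g' e'"
  proof
    fix e' assume e': "e' \<in> snd H"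
    then have "x \<notin> e'" using False by blast
    then show "nm g' e'" using g e' unfolding nm_def g'_def by (metis fun_upd_other)
  qed
  ultimately show False using nc unfolding colorable_nm by blast
qed




locale hj =
  fixes G1 G2 G :: "'a hgraph" and v1 v2 z :: 'a and e1 e2 :: "'a set"
  assumes join: "hajos_join G1 v1 e1 G2 v2 e2 z G"
    and hg1: "hypergraph G1" and hg2: "hypergraph G2"
begin

definition r :: "'a \<Rightarrow> 'a" where "r = (\<lambda>x. if x = v1 \<or> x = v2 then z else x)"
definition e0 :: "'a set" where "e0 = (e1 \<union> e2) - {v1, v2}"
definition A1 :: "'a set set" where "A1 = image r ` (snd G1 - {e1})"
definition A2 :: "'a set set" where "A2 = image r ` (snd G2 - {e2})"
definition estar :: "'a set" where "estar = (if snd G = A1 \<union> A2 \<union> {e0} then e0 else insert z e0)"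
definition rho :: "'a \<Rightarrow> 'a" where "rho y = (if y = z then v1 else y)"
definition S1 :: "'a set" where "S1 = (fst G1 - {v1}) \<union> {z}"
definition S2 :: "'a set" where "S2 = fst G2 - {v2}"

lemma J: "fst G1 \<inter> fst G2 = {} \<and> e1 \<in> snd G1 \<and> v1 \<in> e1 \<and> e2 \<in> snd G2 \<and> v2 \<in> e2 \<and>
     z \<notin> (fst G1 - {v1}) \<union> (fst G2 - {v2}) \<and>
     fst G = (fst G1 - {v1}) \<union> (fst G2 - {v2}) \<union> {z}"
  using join unfolding hajos_join_def Let_def by (elim conjE) (intro conjI; assumption)

lemma disj: "fst G1 \<inter> fst G2 = {}"
  and e1E: "e1 \<in> snd G1" and v1e: "v1 \<in> e1" and e2E: "e2 \<in> snd G2" and v2e: "v2 \<in> e2"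
  and zn: "z \<notin> (fst G1 - {v1}) \<union> (fst G2 - {v2})"
  and VG: "fst G = (fst G1 - {v1}) \<union> (fst G2 - {v2}) \<union> {z}"
  using J by blast+

lemma zn1: "z \<notin> fst G1 - {v1}" and zn2: "z \<notin> fst G2 - {v2}"
  using zn by simp_all

lemma EGor: "snd G = A1 \<union> A2 \<union> {e0} \<or> snd G = A1 \<union> A2 \<union> {insert z e0}"
  using join unfolding hajos_join_def Let_def A1_def A2_def e0_def r_def by simp

lemma EG: "snd G = A1 \<union> A2 \<union> {estar}"
proof (cases "snd G = A1 \<union> A2 \<union> {e0}")
  case True
  then have "estar = e0" unfolding estar_def by (rule if_P)
  then show ?thesis using True by (simp only:)
next
  case False
  then have "estar = insert z e0" unfolding estar_def by (rule if_not_P)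
  moreover have "snd G = A1 \<union> A2 \<union> {insert z e0}" using EGor False by (elim disjE) (rule FalseE, erule notE, assumption)
  ultimately show ?thesis by (simp only:)
qed

lemma estar_cases: "estar = e0 \<or> estar = insert z e0"
  unfolding estar_def by simp

lemma e0_sub: "e0 \<subseteq> estar" and estar_sub: "estar \<subseteq> insert z e0"
  using estar_cases by auto

lemma fin1: "finite (fst G1)" and fin2: "finite (fst G2)"
  using hg1 hg2 unfolding hypergraph_def by blast+

lemma E1sub: "e \<in> snd G1 \<Longrightarrow> e \<subseteq> fst G1"
  using hg1 unfolding hypergraph_def by blast

lemma E2sub: "e \<in> snd G2 \<Longrightarrow> e \<subseteq> fst G2"
  using hg2 unfolding hypergraph_def by blast

lemma v1V: "v1 \<in> fst G1" using E1sub[OF e1E] v1e by blast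
lemma v2V: "v2 \<in> fst G2" using E2sub[OF e2E] v2e by blast

lemma v2n1: "v2 \<notin> fst G1" using v2V disj by blast
lemma v1n2: "v1 \<notin> fst G2" using v1V disj by blast

lemma r_V1: "x \<in> fst G1 \<Longrightarrow> r x = (if x = v1 then z else x)"
  unfolding r_def using v2n1 by auto

lemma r_V2: "x \<in> fst G2 \<Longrightarrow> r x = (if x = v2 then z else x)"
  unfolding r_def using v1n2 by auto

lemma rho_r1: "x \<in> fst G1 \<Longrightarrow> rho (r x) = x"
  using r_V1 zn1 unfolding rho_def by auto

lemma r_S1: "x \<in> fst G1 \<Longrightarrow> r x \<in> S1"
  using r_V1 unfolding S1_def by auto

lemma S1_rho: "y \<in> S1 \<Longrightarrow> rho y \<in> fst G1 \<and> r (rho y) = y"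
  unfolding S1_def rho_def using v1V r_V1 by auto

lemma S1_G: "S1 \<subseteq> fst G" unfolding S1_def VG by blast
lemma S2_G: "S2 \<subseteq> fst G" unfolding S2_def VG by blast
lemma G_S: "fst G = S1 \<union> S2" unfolding S1_def S2_def VG by blast
lemma S12: "S1 \<inter> S2 = {}" unfolding S1_def S2_def using zn2 disj by blast

lemma r_G1: "x \<in> fst G1 \<Longrightarrow> r x \<in> fst G" using r_S1 S1_G by blast

lemma inj_r1: "inj_on r (fst G1)"
  by (metis inj_on_inverseI rho_r1)

lemma img_inj1: "e \<subseteq> fst G1 \<Longrightarrow> e' \<subseteq> fst G1 \<Longrightarrow> r ` e = r ` e' \<Longrightarrow> e = e'"
  using inj_r1 by (meson inj_on_image_eq_iff)

lemma r_img_S1: "e \<subseteq> fst G1 \<Longrightarrow> r ` e \<subseteq> S1" using r_S1 by blast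

lemma r_V2_S: "x \<in> fst G2 \<Longrightarrow> r x \<in> S2 \<union> {z}" using r_V2 unfolding S2_def by auto

lemma ex_a: "\<exists>a. a \<in> e1 \<and> a \<noteq> v1" using hypergraph_edge_ex2[OF hg1 e1E v1e] by blast
lemma ex_b: "\<exists>b. b \<in> e2 \<and> b \<noteq> v2" using hypergraph_edge_ex2[OF hg2 e2E v2e] by blast

lemma e0_iff: "x \<in> e0 \<longleftrightarrow> (x \<in> e1 \<and> x \<noteq> v1) \<or> (x \<in> e2 \<and> x \<noteq> v2)"
  unfolding e0_def using E1sub[OF e1E] E2sub[OF e2E] v2n1 v1n2 by auto

lemma A1_sub: "d \<in> A1 \<Longrightarrow> d \<subseteq> S1"
  unfolding A1_def using E1sub r_img_S1 by blast

lemma A2_sub: "d \<in> A2 \<Longrightarrow> d \<subseteq> S2 \<union> {z}"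
  unfolding A2_def using E2sub r_V2_S by blast

lemma A1_ex: "d \<in> A1 \<Longrightarrow> \<exists>x\<in>d. x \<in> fst G1 - {v1}"
proof -
  assume "d \<in> A1"
  then obtain e where e: "e \<in> snd G1" "d = r ` e" unfolding A1_def by blast
  have "e \<noteq> {}" using hg1 e(1) unfolding hypergraph_def by fastforce
  then obtain y where y: "y \<in> e" by blast
  obtain x where x: "x \<in> e" "x \<noteq> v1" using hypergraph_edge_ex2[OF hg1 e(1) y] by (metis y)
  have "x \<in> fst G1" using E1sub[OF e(1)] x by blast
  then have "r x = x" using r_V1 x by simp
  then show ?thesis using x e \<open>x \<in> fst G1\<close> by (metis DiffI image_eqI singletonD)
qed

lemma estar_a: "\<exists>a\<in>estar. a \<in> e1 \<and> a \<noteq> v1 \<and> a \<in> fst G1 - {v1}"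
  using ex_a e0_iff e0_sub E1sub[OF e1E] by blast

lemma estar_b: "\<exists>b\<in>estar. b \<in> e2 \<and> b \<noteq> v2 \<and> b \<in> S2"
  using ex_b e0_iff e0_sub E2sub[OF e2E] unfolding S2_def by blast

lemma estar_nA1: "estar \<notin> A1"
proof
  assume "estar \<in> A1"
  then have "estar \<subseteq> S1" by (rule A1_sub)
  then show False using estar_b S12 by blast
qed

lemma estar_nA2: "estar \<notin> A2"
proof
  assume "estar \<in> A2"
  then have "estar \<subseteq> S2 \<union> {z}" by (rule A2_sub)
  moreover obtain a where "a \<in> estar" "a \<in> fst G1 - {v1}" using estar_a by blast
  ultimately show False using zn1 disj unfolding S2_def by blast
qed

lemma A12: "A1 \<inter> A2 = {}"
proof (rule ccontr)
  assume "A1 \<inter> A2 \<noteq> {}"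
  then obtain d where d: "d \<in> A1" "d \<in> A2" by blast
  obtain x where "x \<in> d" "x \<in> fst G1 - {v1}" using A1_ex[OF d(1)] by blast
  then show False using A2_sub[OF d(2)] zn1 disj unfolding S2_def by blast
qed

lemma estar_G: "estar \<subseteq> fst G"
proof -
  have "e0 \<subseteq> fst G" unfolding e0_def VG using E1sub[OF e1E] E2sub[OF e2E] by blast
  then show ?thesis using estar_sub VG by blast
qed

lemma hg: "hypergraph G"
  unfolding hypergraph_def
proof (intro conjI ballI)
  show "finite (fst G)" unfolding VG using fin1 fin2 by simp
next
  fix d assume d: "d \<in> snd G"
  have dc: "d \<in> A1 \<or> d \<in> A2 \<or> d = estar" using d unfolding EG by blast
  have zG: "z \<in> fst G" unfolding VG by simp
  show "d \<subseteq> fst G"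
  proof -
    have "d \<subseteq> S1 \<or> d \<subseteq> S2 \<union> {z} \<or> d \<subseteq> fst G" using dc A1_sub A2_sub estar_G by blast
    then show ?thesis using S1_G S2_G zG by blast
  qed
  show "2 \<le> card d"
  proof -
    from dc consider "d \<in> A1" | "d \<in> A2" | "d = estar" by blast
    then show ?thesis
    proof cases
      case 1
      then obtain e where e: "e \<in> snd G1" "d = r ` e" unfolding A1_def by blast
      have "card d = card e" using e inj_r1 E1sub[OF e(1)] by (simp add: card_image inj_on_subset)
      then show ?thesis using hg1 e(1) unfolding hypergraph_def by simp
    next
      case 2
      then obtain e where e: "e \<in> snd G2" "d = r ` e" unfolding A2_def by blast
      have inj2: "inj_on r (fst G2)"
      proof (rule inj_onI)
        fix x y assume "x \<in> fst G2" "y \<in> fst G2" "r x = r y"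
        then show "x = y" using r_V2 zn2 by (metis DiffI singletonD)
      qed
      have "card d = card e" using e inj2 E2sub[OF e(1)] by (simp add: card_image inj_on_subset)
      then show ?thesis using hg2 e(1) unfolding hypergraph_def by simp
    next
      case 3
      obtain a where a: "a \<in> estar" "a \<in> fst G1 - {v1}" using estar_a by blast
      obtain b where b: "b \<in> estar" "b \<in> S2" using estar_b by blast
      have "a \<noteq> b" using a b S12 unfolding S1_def by blast
      have "finite (fst G)" unfolding VG using fin1 fin2 by simp
      then have fe: "finite estar" using estar_G finite_subset by blast
      have "card {a, b} \<le> card estar" using a b fe by (intro card_mono) auto
      then show ?thesis using \<open>a \<noteq> b\<close> 3 by simp
    qed
  qed
qed

lemma r_swap: "(\<lambda>x. if x = v2 \<or> x = v1 then z else x) = r"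
  unfolding r_def by (rule ext) auto

lemma e0_swap: "(e2 \<union> e1) - {v2, v1} = e0"
  unfolding e0_def by blast

lemma EGswap: "snd G = A2 \<union> A1 \<union> {e0} \<or> snd G = A2 \<union> A1 \<union> {insert z e0}"
proof -
  have "A2 \<union> A1 = A1 \<union> A2" by (rule Un_commute)
  then show ?thesis using EGor by (simp only:)
qed

lemma swap: "hj G2 G1 G v2 v1 z e2 e1"
proof
  show "hypergraph G2" "hypergraph G1" by (rule hg2, rule hg1)
  have VG': "fst G = (fst G2 - {v2}) \<union> (fst G1 - {v1}) \<union> {z}" unfolding VG by blast
  have zn': "z \<notin> (fst G2 - {v2}) \<union> (fst G1 - {v1})" using zn by blast
  have dj: "fst G2 \<inter> fst G1 = {}" using disj by blast
  show "hajos_join G2 v2 e2 G1 v1 e1 z G"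
    unfolding hajos_join_def Let_def r_swap e0_swap A1_def[symmetric] A2_def[symmetric]
    using dj e1E v1e e2E v2e zn' VG' EGswap by (intro conjI)
qed

end




lemma swap_exists:
  assumes "p < k" "c < k"
  shows "\<exists>\<sigma>::nat\<Rightarrow>nat. (\<forall>x<k. \<sigma> x < k) \<and> inj_on \<sigma> {..<k} \<and> \<sigma> p = c"
proof -
  define \<sigma> where "\<sigma> x = (if x = p then c else if x = c then p else x)" for x
  have "\<forall>x<k. \<sigma> x < k" using assms unfolding \<sigma>_def by auto
  moreover have "inj_on \<sigma> {..<k}" unfolding \<sigma>_def by (rule inj_onI) (auto split: if_splits)
  moreover have "\<sigma> p = c" unfolding \<sigma>_def by simp
  ultimately show ?thesis by blast
qed

lemma nm_img: "nm f (r ` e) \<longleftrightarrow> nm (f \<circ> r) e"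
  unfolding nm_def by auto

lemma nm_cong: "(\<And>x. x \<in> e \<Longrightarrow> f x = g x) \<Longrightarrow> nm f e \<longleftrightarrow> nm g e"
  unfolding nm_def by auto

lemma range_comp:
  assumes "f ` A \<subseteq> {..<k}" "\<forall>x<k. \<sigma> x < k" shows "(\<sigma> \<circ> f) ` A \<subseteq> {..<k}"
  using assms by auto

lemma range_sub: "f ` A \<subseteq> {..<k} \<Longrightarrow> x \<in> A \<Longrightarrow> f x < k" by auto

context hj begin

definition comb :: "('a \<Rightarrow> nat) \<Rightarrow> ('a \<Rightarrow> nat) \<Rightarrow> 'a \<Rightarrow> nat" where
  "comb g1 g2 x = (if x \<in> fst G1 - {v1} then g1 x else if x = z then g1 v1 else g2 x)"

lemma comb_r1: "x \<in> fst G1 \<Longrightarrow> comb g1 g2 (r x) = g1 x"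
  unfolding comb_def using r_V1 zn1 by auto

lemma comb_r2: "x \<in> fst G2 \<Longrightarrow> g1 v1 = g2 v2 \<Longrightarrow> comb g1 g2 (r x) = g2 x"
  unfolding comb_def using r_V2 zn2 zn1 disj by auto

lemma comb_range:
  assumes "g1 ` fst G1 \<subseteq> {..<k}" "g2 ` fst G2 \<subseteq> {..<k}"
  shows "comb g1 g2 ` fst G \<subseteq> {..<k}"
proof
  fix y assume "y \<in> comb g1 g2 ` fst G"
  then obtain x where x: "x \<in> fst G" "y = comb g1 g2 x" by blast
  have "x \<in> fst G1 - {v1} \<or> x = z \<or> x \<in> fst G2 - {v2}" using x(1) unfolding VG by blast
  then show "y \<in> {..<k}" using assms x(2) v1V unfolding comb_def by auto
qed

lemma comb_col:
  assumes g1: "g1 ` fst G1 \<subseteq> {..<k}" and g2: "g2 ` fst G2 \<subseteq> {..<k}" and eq: "g1 v1 = g2 v2"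
    and D: "D \<subseteq> snd G"
    and c1: "\<And>e. e \<in> snd G1 - {e1} \<Longrightarrow> r ` e \<in> D \<Longrightarrow> nm g1 e"
    and c2: "\<And>e. e \<in> snd G2 - {e2} \<Longrightarrow> r ` e \<in> D \<Longrightarrow> nm g2 e"
    and c3: "estar \<in> D \<Longrightarrow> nm (comb g1 g2) estar"
  shows "colorable (fst G, D) k"
  unfolding colorable_nm
proof (intro exI conjI)
  show "comb g1 g2 ` fst (fst G, D) \<subseteq> {..<k}" using comb_range[OF g1 g2] by simp
  show "\<forall>d\<in>snd (fst G, D). nm (comb g1 g2) d"
  proof
    fix d assume "d \<in> snd (fst G, D)"
    then have dD: "d \<in> D" by simp
    then have "d \<in> A1 \<or> d \<in> A2 \<or> d = estar" using D unfolding EG by blast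
    then show "nm (comb g1 g2) d"
    proof (elim disjE)
      assume "d \<in> A1"
      then obtain e where e: "e \<in> snd G1 - {e1}" "d = r ` e" unfolding A1_def by blast
      have "nm g1 e" using c1 e dD by blast
      moreover have "\<And>x. x \<in> e \<Longrightarrow> (comb g1 g2 \<circ> r) x = g1 x"
      proof -
        fix x assume "x \<in> e"
        then have "x \<in> fst G1" using E1sub e(1) by blast
        then show "(comb g1 g2 \<circ> r) x = g1 x" by (simp add: comb_r1)
      qed
      ultimately show ?thesis unfolding e(2) nm_img using nm_cong by blast
    next
      assume "d \<in> A2"
      then obtain e where e: "e \<in> snd G2 - {e2}" "d = r ` e" unfolding A2_def by blast
      have "nm g2 e" using c2 e dD by blast
      moreover have "\<And>x. x \<in> e \<Longrightarrow> (comb g1 g2 \<circ> r) x = g2 x"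
      proof -
        fix x assume "x \<in> e"
        then have "x \<in> fst G2" using E2sub e(1) by blast
        then show "(comb g1 g2 \<circ> r) x = g2 x" using eq by (simp add: comb_r2)
      qed
      ultimately show ?thesis unfolding e(2) nm_img using nm_cong by blast
    next
      assume "d = estar" then show ?thesis using c3 dD by blast
    qed
  qed
qed

lemma restr1:
  assumes f: "f ` fst G \<subseteq> {..<k}"
  shows "(f \<circ> r) ` fst G1 \<subseteq> {..<k}"
  using f r_G1 by auto

lemma restr2:
  assumes f: "f ` fst G \<subseteq> {..<k}"
  shows "(f \<circ> r) ` fst G2 \<subseteq> {..<k}"
proof -
  have "r x \<in> fst G" if "x \<in> fst G2" for x using that r_V2_S S2_G VG by blast
  then show ?thesis using f by auto
qed

lemma r_v1: "r v1 = z" unfolding r_def by simp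
lemma r_v2: "r v2 = z" unfolding r_def by simp

lemma A1_in: "e \<in> snd G1 - {e1} \<Longrightarrow> r ` e \<in> A1" unfolding A1_def by blast
lemma A2_in: "e \<in> snd G2 - {e2} \<Longrightarrow> r ` e \<in> A2" unfolding A2_def by blast
lemma A1_G: "A1 \<subseteq> snd G" unfolding EG by blast
lemma A2_G: "A2 \<subseteq> snd G" unfolding EG by blast
lemma estar_in: "estar \<in> snd G" unfolding EG by blast

lemma r_id1: "x \<in> fst G1 - {v1} \<Longrightarrow> r x = x" using r_V1 by auto
lemma r_id2: "x \<in> fst G2 - {v2} \<Longrightarrow> r x = x" using r_V2 by auto

lemma estar_elems: "x \<in> estar \<Longrightarrow> x = z \<or> (x \<in> e1 \<and> x \<noteq> v1) \<or> (x \<in> e2 \<and> x \<noteq> v2)"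
  using estar_sub e0_iff by blast

lemma restrict_G1:
  assumes f: "f ` fst G \<subseteq> {..<k}" and D: "\<forall>d\<in>D. nm f d"
    and E: "E \<subseteq> snd G1 - {e1}" and ED: "\<And>e. e \<in> E \<Longrightarrow> r ` e \<in> D"
  shows "colorable (fst G1, E) k"
  unfolding colorable_nm
proof (intro exI conjI)
  show "(f \<circ> r) ` fst (fst G1, E) \<subseteq> {..<k}" using restr1[OF f] by simp
  show "\<forall>e\<in>snd (fst G1, E). nm (f \<circ> r) e"
  proof
    fix e assume "e \<in> snd (fst G1, E)"
    then have "r ` e \<in> D" using ED by simp
    then have "nm f (r ` e)" using D by blast
    then show "nm (f \<circ> r) e" by (simp only: nm_img)
  qed
qed

lemma restrict_G2:
  assumes f: "f ` fst G \<subseteq> {..<k}" and D: "\<forall>d\<in>D. nm f d"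
    and E: "E \<subseteq> snd G2 - {e2}" and ED: "\<And>e. e \<in> E \<Longrightarrow> r ` e \<in> D"
  shows "colorable (fst G2, E) k"
  unfolding colorable_nm
proof (intro exI conjI)
  show "(f \<circ> r) ` fst (fst G2, E) \<subseteq> {..<k}" using restr2[OF f] by simp
  show "\<forall>e\<in>snd (fst G2, E). nm (f \<circ> r) e"
  proof
    fix e assume "e \<in> snd (fst G2, E)"
    then have "r ` e \<in> D" using ED by simp
    then have "nm f (r ` e)" using D by blast
    then show "nm (f \<circ> r) e" by (simp only: nm_img)
  qed
qed

lemma crit_minus:
  assumes "crit k G" "d \<in> snd G" shows "colorable (fst G, snd G - {d}) k"
  using assms psub_edge[OF hg] unfolding crit_def by blast

lemma G_minus_estar_G1:
  assumes "colorable (fst G, snd G - {estar}) k"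
  shows "colorable (fst G1, snd G1 - {e1}) k"
proof -
  obtain f where f: "f ` fst G \<subseteq> {..<k}" "\<forall>d\<in>snd G - {estar}. nm f d"
    using assms unfolding colorable_nm by auto
  have "r ` e \<in> snd G - {estar}" if "e \<in> snd G1 - {e1}" for e
  proof -
    have "r ` e \<in> A1" using that by (rule A1_in)
    then show ?thesis using A1_G estar_nA1 by (metis DiffI singletonD subsetD)
  qed
  then show ?thesis using restrict_G1[OF f(1) f(2)] by blast
qed

lemma G_minus_estar_G2:
  assumes "colorable (fst G, snd G - {estar}) k"
  shows "colorable (fst G2, snd G2 - {e2}) k"
proof -
  obtain f where f: "f ` fst G \<subseteq> {..<k}" "\<forall>d\<in>snd G - {estar}. nm f d"
    using assms unfolding colorable_nm by auto
  have "r ` e \<in> snd G - {estar}" if "e \<in> snd G2 - {e2}" for e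
  proof -
    have "r ` e \<in> A2" using that by (rule A2_in)
    then show ?thesis using A2_G estar_nA2 by (metis DiffI singletonD subsetD)
  qed
  then show ?thesis using restrict_G2[OF f(1) f(2)] by blast
qed

end



lemma avoid2: "\<exists>d::nat. d < 3 \<and> d \<noteq> x \<and> d \<noteq> y" by presburger

context hj begin

lemma A_noncol:
  assumes k: "3 \<le> k" and cG: "crit k G"
  shows "\<not> colorable G1 k"
proof
  assume "colorable G1 k"
  then obtain g1 where g1: "g1 ` fst G1 \<subseteq> {..<k}" "\<forall>e\<in>snd G1. nm g1 e" unfolding colorable_nm by auto
  have "colorable (fst G, snd G - {estar}) k" using crit_minus[OF cG estar_in] .
  then obtain h where h: "h ` fst G \<subseteq> {..<k}" "\<forall>d\<in>snd G - {estar}. nm h d" unfolding colorable_nm by auto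
  define h2 where "h2 = h \<circ> r"
  have h2r: "h2 ` fst G2 \<subseteq> {..<k}" unfolding h2_def by (rule restr2[OF h(1)])
  have h2e: "nm h2 e" if "e \<in> snd G2 - {e2}" for e
  proof -
    have "r ` e \<in> A2" using that by (rule A2_in)
    then have "r ` e \<in> snd G - {estar}" using A2_G estar_nA2 by (metis DiffI singletonD subsetD)
    then have "nm h (r ` e)" using h(2) by blast
    then show ?thesis unfolding h2_def by (simp only: nm_img)
  qed
  have "nm g1 e1" using g1(2) e1E by blast
  then obtain u w where uw: "u \<in> e1" "w \<in> e1" "g1 u \<noteq> g1 w" unfolding nm_def by blast
  obtain a where a: "a \<in> e1" "g1 a \<noteq> g1 v1"
  proof (cases "g1 u = g1 v1")
    case True
    then show ?thesis using that[of w] uw by simp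
  next
    case False
    then show ?thesis using that[of u] uw by simp
  qed
  then have av: "a \<noteq> v1" by blast
  have aV: "a \<in> fst G1" using a E1sub[OF e1E] by blast
  obtain b where b: "b \<in> e2" "b \<noteq> v2" using ex_b by blast
  have bV: "b \<in> fst G2" using b E2sub[OF e2E] by blast
  define c where "c = h2 v2"
  have ck: "c < k" using h2r v2V unfolding c_def by auto
  obtain d where d0: "d < 3" "d \<noteq> c" "d \<noteq> h2 b" using avoid2 by blast
  have dk: "d < k" using d0 k by simp
  have g1v: "g1 v1 < k" "g1 a < k" using g1(1) v1V aV by auto
  obtain \<sigma> where s: "\<forall>x<k. \<sigma> x < k" "inj_on \<sigma> {..<k}" "\<sigma> (g1 v1) = c" "\<sigma> (g1 a) = d"
    using perm_exists[OF g1v(1) g1v(2) a(2)[symmetric] ck dk d0(2)[symmetric]] by blast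
  define g1' where "g1' = \<sigma> \<circ> g1"
  have g1'r: "g1' ` fst G1 \<subseteq> {..<k}" unfolding g1'_def using range_comp[OF g1(1) s(1)] .
  have g1'e: "nm g1' e" if "e \<in> snd G1" for e
  proof -
    have "\<forall>x\<in>e. g1 x < k" using g1(1) E1sub[OF that] by auto
    then show ?thesis unfolding g1'_def using nm_inj[OF _ _ s(2)] g1(2) that by blast
  qed
  have eq: "g1' v1 = h2 v2" unfolding g1'_def c_def[symmetric] using s(3) by simp
  have "colorable (fst G, snd G) k"
  proof (rule comb_col[OF g1'r h2r eq])
    show "snd G \<subseteq> snd G" by simp
    show "\<And>e. e \<in> snd G1 - {e1} \<Longrightarrow> r ` e \<in> snd G \<Longrightarrow> nm g1' e" using g1'e by blast
    show "\<And>e. e \<in> snd G2 - {e2} \<Longrightarrow> r ` e \<in> snd G \<Longrightarrow> nm h2 e" using h2e by blast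
    show "nm (comb g1' h2) estar"
    proof -
      have ae: "a \<in> estar" using a av e0_iff e0_sub by blast
      have be: "b \<in> estar" using b e0_iff e0_sub by blast
      have "comb g1' h2 a = comb g1' h2 (r a)" using r_id1 aV av by simp
      also have "\<dots> = g1' a" by (rule comb_r1[OF aV])
      also have "\<dots> = d" unfolding g1'_def using s(4) by simp
      finally have ca: "comb g1' h2 a = d" .
      have "comb g1' h2 b = comb g1' h2 (r b)" using r_id2 bV b by simp
      also have "\<dots> = h2 b" by (rule comb_r2[of b g1' h2, OF bV eq])
      finally have cb: "comb g1' h2 b = h2 b" .
      show ?thesis unfolding nm_def using ae be ca cb d0(3) by metis
    qed
  qed
  then show False using cG unfolding crit_def by simp
qed

lemma A_crit:
  assumes k: "3 \<le> k" and cG: "crit k G" and nc2: "\<not> colorable G2 k"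
  shows "crit k G1"
  unfolding crit_def
proof (intro conjI allI impI)
  show "hypergraph G1" by (rule hg1)
  show "\<not> colorable G1 k" by (rule A_noncol[OF k cG])
  fix H assume H: "proper_subhypergraph H G1"
  then show "colorable H k"
  proof (cases rule: psub_cases)
    case (1 e)
    have ce: "colorable (fst G1, snd G1 - {e}) k"
    proof (cases "e = e1")
      case True
      then show ?thesis using G_minus_estar_G1[OF crit_minus[OF cG estar_in]] by simp
    next
      case False
      have eE: "e \<in> snd G1 - {e1}" using 1(1) False by blast
      have reA: "r ` e \<in> A1" using eE by (rule A1_in)
      have reG: "r ` e \<in> snd G" using reA A1_G by blast
      obtain h where h: "h ` fst G \<subseteq> {..<k}" "\<forall>d\<in>snd G - {r ` e}. nm h d"
        using crit_minus[OF cG reG] unfolding colorable_nm by auto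
      define h2 where "h2 = h \<circ> r"
      have h2r: "h2 ` fst G2 \<subseteq> {..<k}" unfolding h2_def by (rule restr2[OF h(1)])
      have h2e: "nm h2 e'" if "e' \<in> snd G2 - {e2}" for e'
      proof -
        have A: "r ` e' \<in> A2" using that by (rule A2_in)
        then have "r ` e' \<noteq> r ` e" using reA A12 by (metis IntI empty_iff)
        then have "r ` e' \<in> snd G - {r ` e}" using A A2_G by (metis DiffI singletonD subsetD)
        then have "nm h (r ` e')" using h(2) by blast
        then show ?thesis unfolding h2_def by (simp only: nm_img)
      qed
      have mono2: "\<forall>y\<in>e2. h2 y = h2 v2"
      proof (rule ccontr)
        assume "\<not> (\<forall>y\<in>e2. h2 y = h2 v2)"
        then have "nm h2 e2" using v2e unfolding nm_def by blast
        then have "\<forall>e'\<in>snd G2. nm h2 e'" using h2e by blast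
        then have "colorable G2 k" using h2r unfolding colorable_nm by blast
        then show False using nc2 by blast
      qed
      have hz: "h2 v2 = h z" unfolding h2_def using r_v2 by simp
      have "r ` e \<noteq> estar" using reA estar_nA1 by metis
      then have estG: "estar \<in> snd G - {r ` e}" using estar_in by blast
      then have "nm h estar" using h(2) by blast
      then obtain u w where uw: "u \<in> estar" "w \<in> estar" "h u \<noteq> h w" unfolding nm_def by blast
      obtain x where x: "x \<in> estar" "h x \<noteq> h z"
      proof (cases "h u = h z")
        case True
        then show ?thesis using that[of w] uw by simp
      next
        case False
        then show ?thesis using that[of u] uw by simp
      qed
      have xe1: "x \<in> e1 \<and> x \<noteq> v1"
      proof -
        have "x \<noteq> z" using x(2) by blast
        moreover have "\<not> (x \<in> e2 \<and> x \<noteq> v2)"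
        proof
          assume xe: "x \<in> e2 \<and> x \<noteq> v2"
          then have "x \<in> fst G2" using E2sub[OF e2E] by blast
          then have "h x = h2 x" unfolding h2_def using r_id2 xe by simp
          then show False using mono2 xe hz x(2) by simp
        qed
        ultimately show ?thesis using estar_elems[OF x(1)] by blast
      qed
      define h1 where "h1 = h \<circ> r"
      have xV: "x \<in> fst G1" using xe1 E1sub[OF e1E] by blast
      have n1: "nm h1 e1"
      proof -
        have "h1 x = h x" unfolding h1_def using r_id1 xV xe1 by simp
        moreover have "h1 v1 = h z" unfolding h1_def using r_v1 by simp
        ultimately show ?thesis unfolding nm_def using xe1 v1e x(2) by metis
      qed
      have n2: "nm h1 e'" if "e' \<in> snd G1 - {e1}" "e' \<noteq> e" for e'
      proof -
        have "r ` e' \<noteq> r ` e" using img_inj1 E1sub that 1(1) by blast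
        moreover have "r ` e' \<in> snd G" using A1_in[OF that(1)] A1_G by blast
        ultimately have "r ` e' \<in> snd G - {r ` e}" by blast
        then have "nm h (r ` e')" using h(2) by blast
        then show ?thesis unfolding h1_def by (simp only: nm_img)
      qed
      have "\<forall>e'\<in>snd (fst G1, snd G1 - {e}). nm h1 e'"
      proof
        fix e' assume "e' \<in> snd (fst G1, snd G1 - {e})"
        then have "e' \<in> snd G1" "e' \<noteq> e" by auto
        then show "nm h1 e'" using n1 n2 by (cases "e' = e1") auto
      qed
      moreover have "h1 ` fst (fst G1, snd G1 - {e}) \<subseteq> {..<k}" unfolding h1_def using restr1[OF h(1)] by simp
      ultimately show ?thesis unfolding colorable_nm by blast
    qed
    have "fst H \<subseteq> fst (fst G1, snd G1 - {e})" "snd H \<subseteq> snd (fst G1, snd G1 - {e})" using 1 by auto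
    then show ?thesis using colorable_sub[OF ce] by blast
  next
    case (2 x)
    have xv: "x \<noteq> v1" using 2 e1E v1e by blast
    have xG: "x \<in> fst G" using 2(1) xv VG by blast
    have nx: "\<forall>d\<in>snd G. x \<notin> d"
    proof
      fix d assume "d \<in> snd G"
      then have "d \<in> A1 \<or> d \<in> A2 \<or> d = estar" unfolding EG by blast
      then show "x \<notin> d"
      proof (elim disjE)
        assume "d \<in> A1"
        then obtain e where e: "e \<in> snd G1 - {e1}" "d = r ` e" unfolding A1_def by blast
        show ?thesis
        proof
          assume "x \<in> d"
          then obtain y where y: "y \<in> e" "r y = x" using e by blast
          have "y \<in> fst G1" using E1sub e(1) y by blast
          then have "y = rho x" using rho_r1 y by metis
          moreover have "rho x = x" unfolding rho_def using zn1 2(1) xv by auto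
          ultimately have "x \<in> e" using y by simp
          then show False using 2(2) e by blast
        qed
      next
        assume "d \<in> A2"
        then have "d \<subseteq> S2 \<union> {z}" by (rule A2_sub)
        moreover have "x \<notin> S2 \<union> {z}"
        proof -
          have "x \<notin> fst G2" using 2(1) disj by blast
          moreover have "x \<noteq> z" using zn1 2(1) xv by blast
          ultimately show ?thesis unfolding S2_def by simp
        qed
        ultimately show ?thesis by blast
      next
        assume "d = estar"
        show "x \<notin> d"
        proof
          assume "x \<in> d"
          then have "x = z \<or> (x \<in> e1 \<and> x \<noteq> v1) \<or> (x \<in> e2 \<and> x \<noteq> v2)" using estar_elems \<open>d = estar\<close> by blast
          then show False using 2 xv zn1 disj e1E E2sub[OF e2E] by blast
        qed
      qed
    qed
    have False
    proof (rule deg_le1[OF hg _ _ _ xG])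
      show "\<not> colorable G k" "\<forall>H'. proper_subhypergraph H' G \<longrightarrow> colorable H' k"
        using cG unfolding crit_def by blast+
      show "2 \<le> k" using k by simp
      show "\<forall>e\<in>snd G. \<forall>e'\<in>snd G. x \<in> e \<longrightarrow> x \<in> e' \<longrightarrow> e = e'" using nx by blast
    qed
    then show ?thesis by blast
  qed
qed

end



context hj begin

lemma B_noncol:
  assumes nc1: "\<not> colorable G1 k" and nc2: "\<not> colorable G2 k"
  shows "\<not> colorable G k"
proof
  assume "colorable G k"
  then obtain f where f: "f ` fst G \<subseteq> {..<k}" "\<forall>d\<in>snd G. nm f d" unfolding colorable_nm by auto
  have m1: "\<forall>y\<in>e1. f (r y) = f z"
  proof (rule ccontr)
    assume "\<not> (\<forall>y\<in>e1. f (r y) = f z)"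
    then have "nm (f \<circ> r) e1" using v1e r_v1 unfolding nm_def by (metis comp_apply)
    moreover have "nm (f \<circ> r) e" if "e \<in> snd G1 - {e1}" for e
    proof -
      have "r ` e \<in> snd G" using A1_in[OF that] A1_G by blast
      then have "nm f (r ` e)" using f(2) by blast
      then show ?thesis by (simp only: nm_img)
    qed
    ultimately have "\<forall>e\<in>snd G1. nm (f \<circ> r) e" by blast
    then have "colorable G1 k" using restr1[OF f(1)] unfolding colorable_nm by blast
    then show False using nc1 by blast
  qed
  have m2: "\<forall>y\<in>e2. f (r y) = f z"
  proof (rule ccontr)
    assume "\<not> (\<forall>y\<in>e2. f (r y) = f z)"
    then have "nm (f \<circ> r) e2" using v2e r_v2 unfolding nm_def by (metis comp_apply)
    moreover have "nm (f \<circ> r) e" if "e \<in> snd G2 - {e2}" for e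
    proof -
      have "r ` e \<in> snd G" using A2_in[OF that] A2_G by blast
      then have "nm f (r ` e)" using f(2) by blast
      then show ?thesis by (simp only: nm_img)
    qed
    ultimately have "\<forall>e\<in>snd G2. nm (f \<circ> r) e" by blast
    then have "colorable G2 k" using restr2[OF f(1)] unfolding colorable_nm by blast
    then show False using nc2 by blast
  qed
  have "nm f estar" using f(2) estar_in by blast
  then obtain u w where uw: "u \<in> estar" "w \<in> estar" "f u \<noteq> f w" unfolding nm_def by blast
  have all: "f y = f z" if "y \<in> estar" for y
  proof -
    from estar_elems[OF that] consider "y = z" | "y \<in> e1" "y \<noteq> v1" | "y \<in> e2" "y \<noteq> v2" by blast
    then show ?thesis
    proof cases
      case 1 then show ?thesis by simp
    next
      case 2
      then have "y \<in> fst G1 - {v1}" using E1sub[OF e1E] by blast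
      then have "r y = y" by (rule r_id1)
      then show ?thesis using m1 2 by metis
    next
      case 3
      then have "y \<in> fst G2 - {v2}" using E2sub[OF e2E] by blast
      then have "r y = y" by (rule r_id2)
      then show ?thesis using m2 3 by metis
    qed
  qed
  show False using all[OF uw(1)] all[OF uw(2)] uw(3) by simp
qed

lemma B_estar:
  assumes c1: "colorable (fst G1, snd G1 - {e1}) k" and c2: "colorable (fst G2, snd G2 - {e2}) k"
  shows "colorable (fst G, snd G - {estar}) k"
proof -
  obtain g1 where g1: "g1 ` fst G1 \<subseteq> {..<k}" "\<forall>e\<in>snd G1 - {e1}. nm g1 e"
    using c1 unfolding colorable_nm by auto
  obtain g2 where g2: "g2 ` fst G2 \<subseteq> {..<k}" "\<forall>e\<in>snd G2 - {e2}. nm g2 e"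
    using c2 unfolding colorable_nm by auto
  have "g1 v1 < k" "g2 v2 < k" using g1(1) g2(1) v1V v2V by auto
  then obtain \<sigma> where s: "\<forall>x<k. \<sigma> x < k" "inj_on \<sigma> {..<k}" "\<sigma> (g1 v1) = g2 v2"
    using swap_exists by blast
  define g1' where "g1' = \<sigma> \<circ> g1"
  have g1'r: "g1' ` fst G1 \<subseteq> {..<k}" unfolding g1'_def using range_comp[OF g1(1) s(1)] .
  have eq: "g1' v1 = g2 v2" unfolding g1'_def using s(3) by simp
  show ?thesis
  proof (rule comb_col[OF g1'r g2(1) eq])
    show "snd G - {estar} \<subseteq> snd G" by blast
    show "nm g1' e" if "e \<in> snd G1 - {e1}" for e
    proof -
      have "\<forall>x\<in>e. g1 x < k" using g1(1) E1sub that by blast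
      then show ?thesis unfolding g1'_def using nm_inj[OF _ _ s(2)] g1(2) that by blast
    qed
    show "nm g2 e" if "e \<in> snd G2 - {e2}" for e using g2(2) that by blast
    show "estar \<in> snd G - {estar} \<Longrightarrow> nm (comb g1' g2) estar" by blast
  qed
qed

lemma B_edge1:
  assumes cr1: "crit k G1" and nc2: "\<not> colorable G2 k" and c2: "colorable (fst G2, snd G2 - {e2}) k"
    and e: "e \<in> snd G1 - {e1}"
  shows "colorable (fst G, snd G - {r ` e}) k"
proof -
  have "colorable (fst G1, snd G1 - {e}) k" using cr1 psub_edge[OF hg1] e unfolding crit_def by blast
  then obtain g1 where g1: "g1 ` fst G1 \<subseteq> {..<k}" "\<forall>e'\<in>snd G1 - {e}. nm g1 e'"
    unfolding colorable_nm by auto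
  obtain g2 where g2: "g2 ` fst G2 \<subseteq> {..<k}" "\<forall>e'\<in>snd G2 - {e2}. nm g2 e'"
    using c2 unfolding colorable_nm by auto
  have mono2: "\<forall>y\<in>e2. g2 y = g2 v2"
  proof (rule ccontr)
    assume "\<not> (\<forall>y\<in>e2. g2 y = g2 v2)"
    then have "nm g2 e2" using v2e unfolding nm_def by blast
    then have "\<forall>e'\<in>snd G2. nm g2 e'" using g2(2) by blast
    then have "colorable G2 k" using g2(1) unfolding colorable_nm by blast
    then show False using nc2 by blast
  qed
  have "g1 v1 < k" "g2 v2 < k" using g1(1) g2(1) v1V v2V by auto
  then obtain \<sigma> where s: "\<forall>x<k. \<sigma> x < k" "inj_on \<sigma> {..<k}" "\<sigma> (g1 v1) = g2 v2"
    using swap_exists by blast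
  define g1' where "g1' = \<sigma> \<circ> g1"
  have g1'r: "g1' ` fst G1 \<subseteq> {..<k}" unfolding g1'_def using range_comp[OF g1(1) s(1)] .
  have eq: "g1' v1 = g2 v2" unfolding g1'_def using s(3) by simp
  show ?thesis
  proof (rule comb_col[OF g1'r g2(1) eq])
    show "snd G - {r ` e} \<subseteq> snd G" by blast
    show "nm g1' e'" if "e' \<in> snd G1 - {e1}" "r ` e' \<in> snd G - {r ` e}" for e'
    proof -
      have "e' \<noteq> e" using that(2) by blast
      then have "nm g1 e'" using g1(2) that(1) by blast
      moreover have "\<forall>x\<in>e'. g1 x < k" using g1(1) E1sub that(1) by blast
      ultimately show ?thesis unfolding g1'_def using nm_inj[OF _ _ s(2)] by blast
    qed
    show "nm g2 e'" if "e' \<in> snd G2 - {e2}" for e' using g2(2) that by blast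
    show "nm (comb g1' g2) estar"
    proof -
      have "e1 \<noteq> e" using e by blast
      then have "nm g1 e1" using g1(2) e1E by blast
      then obtain u w where uw: "u \<in> e1" "w \<in> e1" "g1 u \<noteq> g1 w" unfolding nm_def by blast
      obtain a where a: "a \<in> e1" "g1 a \<noteq> g1 v1"
      proof (cases "g1 u = g1 v1")
        case True
        then show ?thesis using that[of w] uw by simp
      next
        case False
        then show ?thesis using that[of u] uw by simp
      qed
      then have av: "a \<noteq> v1" by blast
      have aV: "a \<in> fst G1" using a E1sub[OF e1E] by blast
      obtain b where b: "b \<in> e2" "b \<noteq> v2" using ex_b by blast
      have bV: "b \<in> fst G2" using b E2sub[OF e2E] by blast
      have ae: "a \<in> estar" using a av e0_iff e0_sub by blast
      have be: "b \<in> estar" using b e0_iff e0_sub by blast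
      have "comb g1' g2 a = comb g1' g2 (r a)" using r_id1 aV av by simp
      also have "\<dots> = g1' a" by (rule comb_r1[OF aV])
      finally have ca: "comb g1' g2 a = \<sigma> (g1 a)" unfolding g1'_def by simp
      have "g1 a < k" "g1 v1 < k" using g1(1) aV v1V by auto
      then have "\<sigma> (g1 a) \<noteq> \<sigma> (g1 v1)" using s(2) a(2) by (meson inj_onD lessThan_iff)
      then have ca': "comb g1' g2 a \<noteq> g2 v2" using ca s(3) by simp
      have "comb g1' g2 b = comb g1' g2 (r b)" using r_id2 bV b by simp
      also have "\<dots> = g2 b" by (rule comb_r2[of b g1' g2, OF bV eq])
      finally have cb: "comb g1' g2 b = g2 v2" using mono2 b by simp
      show ?thesis unfolding nm_def using ae be ca' cb by metis
    qed
  qed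
qed

lemma B_vertex1:
  assumes cr1: "crit k G1" and k: "2 \<le> k" and x: "x \<in> S1" and nx: "\<forall>d\<in>snd G. x \<notin> d"
  shows False
proof (cases "x = z")
  case True
  have one: "\<forall>e\<in>snd G1. \<forall>e'\<in>snd G1. v1 \<in> e \<longrightarrow> v1 \<in> e' \<longrightarrow> e = e'"
  proof -
    have "e = e1" if "e \<in> snd G1" "v1 \<in> e" for e
    proof (rule ccontr)
      assume "e \<noteq> e1"
      then have "r ` e \<in> snd G" using A1_in that(1) A1_G by blast
      moreover have "z \<in> r ` e" using that(2) r_v1 by (metis imageI)
      ultimately show False using nx True by blast
    qed
    then show ?thesis by blast
  qed
  show False
  proof (rule deg_le1[OF hg1 _ _ k v1V one])
    show "\<not> colorable G1 k" "\<forall>H'. proper_subhypergraph H' G1 \<longrightarrow> colorable H' k"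
      using cr1 unfolding crit_def by blast+
  qed
next
  case False
  then have xV: "x \<in> fst G1 - {v1}" using x unfolding S1_def by blast
  have none: "\<forall>e\<in>snd G1. x \<notin> e"
  proof
    fix e assume e: "e \<in> snd G1"
    show "x \<notin> e"
    proof
      assume xe: "x \<in> e"
      show False
      proof (cases "e = e1")
        case True
        then have "x \<in> estar" using xe xV e0_iff e0_sub by blast
        then show False using nx estar_in by blast
      next
        case False
        then have "r ` e \<in> snd G" using A1_in e A1_G by blast
        moreover have "x \<in> r ` e" using xe r_id1[OF xV] by (metis imageI)
        ultimately show False using nx by blast
      qed
    qed
  qed
  show False
  proof (rule deg_le1[OF hg1 _ _ k])
    show "\<not> colorable G1 k" "\<forall>H'. proper_subhypergraph H' G1 \<longrightarrow> colorable H' k"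
      using cr1 unfolding crit_def by blast+
    show "x \<in> fst G1" using xV by blast
    show "\<forall>e\<in>snd G1. \<forall>e'\<in>snd G1. x \<in> e \<longrightarrow> x \<in> e' \<longrightarrow> e = e'" using none by blast
  qed
qed

end



lemma conn_induct[consumes 1, case_names base step]:
  assumes "conn F a b" "P a" "\<And>y y'. conn F a y \<Longrightarrow> adj F y y' \<Longrightarrow> P y \<Longrightarrow> P y'"
  shows "P b"
  using assms(1) unfolding conn_def
proof (induction rule: rtranclp_induct)
  case base then show ?case using assms(2) by simp
next
  case (step y z) then show ?case using assms(3) unfolding conn_def by blast
qed

context hj begin

definition F1 :: "'a set set \<Rightarrow> 'a set set" where
  "F1 F = {e \<in> snd G1 - {e1}. r ` e \<in> F} \<union> (if estar \<in> F then {e1} else {})"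

lemma F1_sub: "F1 F \<subseteq> snd G1" unfolding F1_def using e1E by auto

lemma estar_S1_rho: "w \<in> estar \<Longrightarrow> w \<in> S1 \<Longrightarrow> rho w \<in> e1"
proof -
  assume w: "w \<in> estar" "w \<in> S1"
  from estar_elems[OF w(1)] consider "w = z" | "w \<in> e1" "w \<noteq> v1" | "w \<in> e2" "w \<noteq> v2" by blast
  then show "rho w \<in> e1"
  proof cases
    case 1 then show ?thesis unfolding rho_def using v1e by simp
  next
    case 2
    then have "w \<noteq> z" using zn1 E1sub[OF e1E] by blast
    then show ?thesis unfolding rho_def using 2 by simp
  next
    case 3
    then have "w \<in> S2" using E2sub[OF e2E] unfolding S2_def by blast
    then show ?thesis using w(2) S12 by blast
  qed
qed

lemma conn_G_G1:
  assumes c: "conn F u y" and F: "F \<subseteq> snd G" and u: "u \<in> S1"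
  shows "(y \<in> S1 \<longrightarrow> conn (F1 F) (rho u) (rho y)) \<and> (y \<in> S2 \<longrightarrow> conn (F1 F) (rho u) v1)"
  using c
proof (induction rule: conn_induct)
  case base
  have "u \<notin> S2" using u S12 by blast
  then show ?case by simp
next
  case (step y y')
  obtain e where e: "e \<in> F" "y \<in> e" "y' \<in> e" using step(2) unfolding adj_def by blast
  have eG: "e \<in> snd G" using e F by blast
  have "e \<subseteq> fst G" using hg eG unfolding hypergraph_def by blast
  then have yS: "y \<in> S1 \<or> y \<in> S2" and y'S: "y' \<in> S1 \<or> y' \<in> S2" using e G_S by blast+
  have IH1: "y \<in> S1 \<Longrightarrow> conn (F1 F) (rho u) (rho y)" and IH2: "y \<in> S2 \<Longrightarrow> conn (F1 F) (rho u) v1"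
    using step(3) by blast+
  have "e \<in> A1 \<or> e \<in> A2 \<or> e = estar" using eG unfolding EG by blast
  then show ?case
  proof (elim disjE)
    assume "e \<in> A1"
    then obtain e'' where e'': "e'' \<in> snd G1 - {e1}" "e = r ` e''" unfolding A1_def by blast
    have inF: "e'' \<in> F1 F" unfolding F1_def using e'' e(1) by blast
    have eS1: "e \<subseteq> S1" using \<open>e \<in> A1\<close> by (rule A1_sub)
    have rin: "rho w \<in> e''" if wi: "w \<in> e" for w
    proof -
      obtain x where x: "x \<in> e''" "w = r x" using wi e''(2) by blast
      have "x \<in> fst G1" using x(1) E1sub e''(1) by blast
      then show ?thesis using x rho_r1 by simp
    qed
    have "conn (F1 F) (rho y) (rho y')" using conn_edge[OF inF rin[OF e(2)] rin[OF e(3)]] .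
    moreover have "y \<in> S1" "y' \<in> S1" using e eS1 by blast+
    ultimately have "conn (F1 F) (rho u) (rho y')" using IH1 conn_trans by metis
    moreover have "y' \<notin> S2" using \<open>y' \<in> S1\<close> S12 by blast
    ultimately show ?case by blast
  next
    assume "e \<in> A2"
    then have eS2: "e \<subseteq> S2 \<union> {z}" by (rule A2_sub)
    have rz: "rho z = v1" unfolding rho_def by simp
    have cv: "conn (F1 F) (rho u) v1"
    proof (cases "y \<in> S2")
      case True then show ?thesis using IH2 by blast
    next
      case False
      then have "y = z" "y \<in> S1" using eS2 e(2) yS by blast+
      then show ?thesis using IH1 rz by metis
    qed
    show ?case
    proof (intro conjI impI)
      assume "y' \<in> S1"
      then have "y' = z" using eS2 e(3) S12 by blast
      then show "conn (F1 F) (rho u) (rho y')" using cv rz by simp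
    next
      assume "y' \<in> S2"
      show "conn (F1 F) (rho u) v1" by (rule cv)
    qed
  next
    assume est: "e = estar"
    have inF: "e1 \<in> F1 F" unfolding F1_def using e(1) est by simp
    have cv: "conn (F1 F) (rho u) v1"
    proof (cases "y \<in> S2")
      case True then show ?thesis using IH2 by blast
    next
      case False
      then have yS1: "y \<in> S1" using yS by blast
      then have "rho y \<in> e1" using estar_S1_rho e(2) est by blast
      then have "conn (F1 F) (rho y) v1" using conn_edge[OF inF _ v1e] by blast
      then show ?thesis by (rule conn_trans[OF IH1[OF yS1]])
    qed
    show ?case
    proof (intro conjI impI)
      assume y'1: "y' \<in> S1"
      then have "rho y' \<in> e1" using estar_S1_rho e(3) est by blast
      then have "conn (F1 F) v1 (rho y')" using conn_edge[OF inF v1e] by blast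
      with cv show "conn (F1 F) (rho u) (rho y')" by (rule conn_trans)
    next
      assume "y' \<in> S2"
      show "conn (F1 F) (rho u) v1" by (rule cv)
    qed
  qed
qed

definition Phi :: "'a set set \<Rightarrow> 'a set set" where
  "Phi S = image r ` (S - {e1}) \<union> (if e1 \<in> S then insert estar A2 else {})"

lemma conn_G1_G:
  assumes c: "conn S x y" and S: "S \<subseteq> snd G1" and Q: "\<exists>b\<in>e2 - {v2}. conn A2 z b"
  shows "conn (Phi S) (r x) (r y)"
  using c
proof (induction rule: conn_induct)
  case base then show ?case by simp
next
  case (step y y')
  obtain e where e: "e \<in> S" "y \<in> e" "y' \<in> e" using step(2) unfolding adj_def by blast
  have "conn (Phi S) (r y) (r y')"
  proof (cases "e = e1")
    case False
    then have "r ` e \<in> Phi S" unfolding Phi_def using e(1) by blast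
    then show ?thesis using conn_edge[OF _ imageI[OF e(2)] imageI[OF e(3)]] by blast
  next
    case True
    obtain b where b: "b \<in> e2" "b \<noteq> v2" "conn A2 z b" using Q by blast
    have e1S: "e1 \<in> S" using e(1) True by simp
    have ePhi: "estar \<in> Phi S" "A2 \<subseteq> Phi S" unfolding Phi_def using e1S by auto
    have be: "b \<in> estar" using b e0_iff e0_sub by blast
    have cb: "conn (Phi S) (r w) b" if "w \<in> e1" for w
    proof (cases "w = v1")
      case True
      have "conn (Phi S) z b" using conn_mono[OF b(3) ePhi(2)] .
      then show ?thesis using r_v1 True by simp
    next
      case False
      have "w \<in> fst G1" using that E1sub[OF e1E] by blast
      then have rw: "r w = w" using r_id1 False by blast
      have "w \<in> estar" using that False e0_iff e0_sub by blast
      then show ?thesis using rw conn_edge[OF ePhi(1) _ be] by simp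
    qed
    have "y \<in> e1" "y' \<in> e1" using e True by simp_all
    then have c1: "conn (Phi S) (r y) b" and c2: "conn (Phi S) (r y') b" using cb by blast+
    show ?thesis using c1 conn_sym[OF c2] by (rule conn_trans)
  qed
  with step(3) show ?case by (rule conn_trans)
qed

lemma conn_G2_G:
  assumes c: "conn S x y" and S: "S \<subseteq> snd G2"
  shows "conn (image r ` S) (r x) (r y)"
  using c
proof (induction rule: conn_induct)
  case base then show ?case by simp
next
  case (step y y')
  obtain e where e: "e \<in> S" "y \<in> e" "y' \<in> e" using step(2) unfolding adj_def by blast
  have "r ` e \<in> image r ` S" using e(1) by blast
  then have "conn (image r ` S) (r y) (r y')" using conn_edge[OF _ imageI[OF e(2)] imageI[OF e(3)]] by blast
  with step(3) show ?case by (rule conn_trans)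
qed

lemma A_conn:
  assumes cG: "crit k G" and nc2: "\<not> colorable G2 k" and k: "2 \<le> k"
  shows "\<exists>b\<in>e2 - {v2}. conn A2 z b"
proof -
  have c2: "colorable (fst G2, snd G2 - {e2}) k"
    using G_minus_estar_G2[OF crit_minus[OF cG estar_in]] .
  obtain b where b: "b \<in> e2 - {v2}" "conn (snd G2 - {e2}) v2 b"
    using recolor_conn[OF hg2 e2E v2e nc2 c2 k] by blast
  have "conn (image r ` (snd G2 - {e2})) (r v2) (r b)" using conn_G2_G[OF b(2)] by blast
  moreover have "r b = b" using b(1) E2sub[OF e2E] r_id2 by blast
  ultimately have "conn A2 z b" unfolding A2_def r_v2 by simp
  then show ?thesis using b(1) by blast
qed

lemma A_lambda:
  assumes lG: "hlambda G \<le> k" and Q: "\<exists>b\<in>e2 - {v2}. conn A2 z b"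
  shows "hlambda G1 \<le> k"
proof (rule hlambda_le[OF hg1])
  fix u w assume uw: "u \<in> fst G1" "w \<in> fst G1" "u \<noteq> w"
  have ruw: "r u \<noteq> r w" using inj_r1 uw by (meson inj_onD)
  have "local_lambda G1 u w \<le> local_lambda G (r u) (r w)"
  proof (rule lambda_mono[OF hg ruw r_G1[OF uw(1)]])
    show "Phi S \<subseteq> snd G" if "S \<subseteq> snd G1" for S
      unfolding Phi_def using that A1_in A1_G A2_G estar_in by auto
    show "Phi S \<inter> Phi S' = {}" if "S \<subseteq> snd G1" "S' \<subseteq> snd G1" "S \<inter> S' = {}" for S S'
    proof (rule ccontr)
      assume "Phi S \<inter> Phi S' \<noteq> {}"
      then obtain d where d: "d \<in> Phi S" "d \<in> Phi S'" by blast
      have P1: "d \<in> image r ` (S - {e1}) \<or> (e1 \<in> S \<and> (d = estar \<or> d \<in> A2))"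
        using d(1) unfolding Phi_def by (auto split: if_splits)
      have P2: "d \<in> image r ` (S' - {e1}) \<or> (e1 \<in> S' \<and> (d = estar \<or> d \<in> A2))"
        using d(2) unfolding Phi_def by (auto split: if_splits)
      have inA1: "d \<in> A1" if "d \<in> image r ` (T - {e1})" "T \<subseteq> snd G1" for T
        using that unfolding A1_def by blast
      show False
      proof (cases "d \<in> image r ` (S - {e1})")
        case True
        then have dA1: "d \<in> A1" using inA1 that(1) by blast
        show False
        proof (cases "d \<in> image r ` (S' - {e1})")
          case True
          obtain e where e: "e \<in> S - {e1}" "d = r ` e" using \<open>d \<in> image r ` (S - {e1})\<close> by blast
          obtain e' where e': "e' \<in> S' - {e1}" "d = r ` e'" using True by blast
          have "e = e'" using img_inj1[of e e'] E1sub e e' that(1,2) by blast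
          then show False using e e' that(3) by blast
        next
          case False
          then have "d = estar \<or> d \<in> A2" using P2 by blast
          then show False using dA1 estar_nA1 A12 by blast
        qed
      next
        case False
        then have "e1 \<in> S" "d = estar \<or> d \<in> A2" using P1 by blast+
        show False
        proof (cases "d \<in> image r ` (S' - {e1})")
          case True
          then have "d \<in> A1" using inA1 that(2) by blast
          then show False using \<open>d = estar \<or> d \<in> A2\<close> estar_nA1 A12 by blast
        next
          case False
          then have "e1 \<in> S'" using P2 by blast
          then show False using \<open>e1 \<in> S\<close> that(3) by blast
        qed
      qed
    qed
    show "conn (Phi (set es)) (r u) (r w)" if "hyperpath G1 u w vs es" for vs es
    proof -
      have "conn (set es) u w" using path_conn[OF that] .
      moreover have "set es \<subseteq> snd G1" using that unfolding hyperpath_def by blast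
      ultimately show ?thesis using conn_G1_G Q by blast
    qed
  qed
  also have "\<dots> \<le> hlambda G" using local_le_hlambda[OF hg r_G1[OF uw(1)] r_G1[OF uw(2)] ruw] .
  finally show "local_lambda G1 u w \<le> k" using lG by simp
qed

lemma B_lambda:
  assumes l1: "hlambda G1 \<le> k" and u: "u \<in> S1" and w: "w \<in> fst G" and uw: "u \<noteq> w"
    and side: "w \<in> S1 \<or> u \<noteq> z"
  shows "local_lambda G u w \<le> k"
proof -
  define w' where "w' = (if w \<in> S1 then rho w else v1)"
  have u1: "rho u \<in> fst G1" using S1_rho[OF u] by blast
  have w1: "w' \<in> fst G1" unfolding w'_def using S1_rho v1V by auto
  have neq: "rho u \<noteq> w'"
  proof (cases "w \<in> S1")
    case True
    then show ?thesis unfolding w'_def using S1_rho u uw by metis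
  next
    case False
    then have "u \<noteq> z" using side by blast
    then have "rho u = u" "u \<noteq> v1" using u unfolding rho_def S1_def by auto
    then show ?thesis unfolding w'_def using False by simp
  qed
  have "local_lambda G u w \<le> local_lambda G1 (rho u) w'"
  proof (rule lambda_mono[OF hg1 neq u1])
    show "F1 S \<subseteq> snd G1" for S by (rule F1_sub)
    show "F1 S \<inter> F1 S' = {}" if "S \<subseteq> snd G" "S' \<subseteq> snd G" "S \<inter> S' = {}" for S S'
    proof (rule ccontr)
      assume "F1 S \<inter> F1 S' \<noteq> {}"
      then obtain e where e: "e \<in> F1 S" "e \<in> F1 S'" by blast
      show False
      proof (cases "e = e1")
        case True
        then have "estar \<in> S" "estar \<in> S'" using e unfolding F1_def by (auto split: if_splits)
        then show False using that(3) by blast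
      next
        case False
        then have "r ` e \<in> S" "r ` e \<in> S'" using e unfolding F1_def by (auto split: if_splits)
        then show False using that(3) by blast
      qed
    qed
    show "conn (F1 (set es)) (rho u) w'" if "hyperpath G u w vs es" for vs es
    proof -
      have c: "conn (set es) u w" using path_conn[OF that] .
      have "set es \<subseteq> snd G" using that unfolding hyperpath_def by blast
      note cc = conn_G_G1[OF c this u]
      have "w \<in> S1 \<or> w \<in> S2" using w G_S by blast
      then show ?thesis using cc unfolding w'_def by auto
    qed
  qed
  also have "\<dots> \<le> hlambda G1" using local_le_hlambda[OF hg1 u1 w1 neq] .
  finally show ?thesis using l1 by simp
qed

end



lemma class_C_iff:
  assumes "1 \<le> k"
  shows "X \<in> class_C k \<longleftrightarrow> crit k X \<and> hlambda X \<le> k"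
  unfolding class_C_def using critical_iff[OF assms, of X] crit_def by blast

theorem claim2:
  fixes k :: nat and G1 G2 G :: "'a hgraph" and v1 v2 vs :: 'a and e1 e2 :: "'a set"
  assumes "k \<ge> 3"
    and "hypergraph G1" and "hypergraph G2"
    and "hajos_join G1 v1 e1 G2 v2 e2 vs G"
  shows "G \<in> class_C k \<longleftrightarrow> G1 \<in> class_C k \<and> G2 \<in> class_C k"
proof -
  interpret H: hj G1 G2 G v1 v2 vs e1 e2 using assms(2-4) by unfold_locales
  interpret H': hj G2 G1 G v2 v1 vs e2 e1 by (rule H.swap)
  have k: "3 \<le> k" "1 \<le> k" "2 \<le> k" using assms(1) by simp_all
  have rr: "H'.r = H.r" unfolding H.r_def H'.r_def by (rule ext) auto
  show ?thesis
  proof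
    assume "G \<in> class_C k"
    then have cG: "crit k G" and lG: "hlambda G \<le> k" using class_C_iff[OF k(2)] by blast+
    have nc1: "\<not> colorable G1 k" by (rule H.A_noncol[OF k(1) cG])
    have nc2: "\<not> colorable G2 k" by (rule H'.A_noncol[OF k(1) cG])
    have "crit k G1" by (rule H.A_crit[OF k(1) cG nc2])
    moreover have "crit k G2" by (rule H'.A_crit[OF k(1) cG nc1])
    moreover have "hlambda G1 \<le> k" by (rule H.A_lambda[OF lG H.A_conn[OF cG nc2 k(3)]])
    moreover have "hlambda G2 \<le> k" by (rule H'.A_lambda[OF lG H'.A_conn[OF cG nc1 k(3)]])
    ultimately show "G1 \<in> class_C k \<and> G2 \<in> class_C k" using class_C_iff[OF k(2)] by blast
  next
    assume "G1 \<in> class_C k \<and> G2 \<in> class_C k"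
    then have c1: "crit k G1" and l1: "hlambda G1 \<le> k" and c2: "crit k G2" and l2: "hlambda G2 \<le> k"
      using class_C_iff[OF k(2)] by blast+
    have nc1: "\<not> colorable G1 k" and nc2: "\<not> colorable G2 k" using c1 c2 unfolding crit_def by blast+
    have c1e: "colorable (fst G1, snd G1 - {e1}) k"
      using c1 psub_edge[OF H.hg1 H.e1E] unfolding crit_def by blast
    have c2e: "colorable (fst G2, snd G2 - {e2}) k"
      using c2 psub_edge[OF H.hg2 H.e2E] unfolding crit_def by blast
    have "crit k G"
      unfolding crit_def
    proof (intro conjI allI impI)
      show "hypergraph G" by (rule H.hg)
      show "\<not> colorable G k" by (rule H.B_noncol[OF nc1 nc2])
      fix H0 assume H0: "proper_subhypergraph H0 G"
      then show "colorable H0 k"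
      proof (cases rule: psub_cases)
        case (1 d)
        have cd: "colorable (fst G, snd G - {d}) k"
        proof -
          have "d \<in> H.A1 \<or> d \<in> H.A2 \<or> d = H.estar" using 1(1) unfolding H.EG by blast
          then show ?thesis
          proof (elim disjE)
            assume "d \<in> H.A1"
            then obtain e where e: "e \<in> snd G1 - {e1}" "d = H.r ` e" unfolding H.A1_def by blast
            show ?thesis unfolding e(2) by (rule H.B_edge1[OF c1 nc2 c2e e(1)])
          next
            assume "d \<in> H.A2"
            then obtain e where e: "e \<in> snd G2 - {e2}" "d = H.r ` e" unfolding H.A2_def by blast
            show ?thesis unfolding e(2) using H'.B_edge1[OF c2 nc1 c1e e(1)] rr by simp
          next
            assume "d = H.estar"
            then show ?thesis using H.B_estar[OF c1e c2e] by simp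
          qed
        qed
        have "fst H0 \<subseteq> fst (fst G, snd G - {d})" "snd H0 \<subseteq> snd (fst G, snd G - {d})" using 1 by auto
        then show ?thesis using colorable_sub[OF cd] by blast
      next
        case (2 x)
        have "x \<in> H.S1 \<or> x \<in> H.S2" using 2(1) H.G_S by blast
        then have False
        proof
          assume "x \<in> H.S1"
          then show False using H.B_vertex1[OF c1 k(3) _ 2(2)] by blast
        next
          assume "x \<in> H.S2"
          then have "x \<in> H'.S1" unfolding H.S2_def H'.S1_def by blast
          then show False using H'.B_vertex1[OF c2 k(3) _ 2(2)] by blast
        qed
        then show ?thesis by blast
      qed
    qed
    moreover have "hlambda G \<le> k"
    proof (rule hlambda_le[OF H.hg])
      fix u w assume uw: "u \<in> fst G" "w \<in> fst G" "u \<noteq> w"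
      have uS: "u \<in> H.S1 \<or> u \<in> H.S2" using uw(1) H.G_S by blast
      have S2S1: "H.S2 \<subseteq> H'.S1" unfolding H.S2_def H'.S1_def by blast
      have zS1: "vs \<in> H'.S1" unfolding H'.S1_def by blast
      show "local_lambda G u w \<le> k"
      proof (cases "u \<in> H.S1")
        case True
        show ?thesis
        proof (cases "w \<in> H.S1 \<or> u \<noteq> vs")
          case True
          then show ?thesis using H.B_lambda[OF l1 \<open>u \<in> H.S1\<close> uw(2) uw(3)] by blast
        next
          case False
          then have "w \<in> H.S2" "u = vs" using uw(2) H.G_S by blast+
          then have "w \<in> H'.S1" "u \<in> H'.S1" using S2S1 zS1 by blast+
          then show ?thesis using H'.B_lambda[OF l2 _ uw(2) uw(3)] by blast
        qed
      next
        case False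
        then have uS2: "u \<in> H.S2" using uS by blast
        then have "u \<noteq> vs" using H.zn2 unfolding H.S2_def by blast
        moreover have "u \<in> H'.S1" using uS2 S2S1 by blast
        ultimately show ?thesis using H'.B_lambda[OF l2 _ uw(2) uw(3)] by blast
      qed
    qed
    ultimately show "G \<in> class_C k" using class_C_iff[OF k(2)] by blast
  qed
qed



end
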